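(* Let $n$ be the number of processes, let $m$ be a positive integer, and let $k$ be a real number with $k\ge\sqrt{2n}$. Algorithm A (described in the context), with $\mathit{logNumIncrems}$ implemented as a $\lceil\log_2 m\rceil$-bounded max-register, is a wait-free linearizable implementation of a $k$-multiplicative-accurate $m$-bounded counter. When the max-register is implemented from read-write registers by an $h$-bounded max-register algorithm whose MaxRead and MaxWrite each take $O(\log h)$ steps, every Read and every Increment takes $O(\log\log m)$ steps.
   Context: Model: $n$ asynchronous, crash-prone processes communicate through linearizable shared objects. An implementation is wait-free if every process that takes infinitely many steps completes infinitely many operations. An implementation is linearizable if, in every execution, the complete operations and some of the incomplete operations can be totally ordered so that (a) the order respects the real-time order of non-overlapping operations and (b) the sequence satisfies the object's sequential specification. A max-register supports MaxWrite$(v)$ and MaxRead. A MaxRead returns the largest value among all preceding MaxWrites, or the initial value if there was none. It is $h$-bounded if no MaxWrite argument exceeds $h$. A $k$-multiplicative-accurate counter supports Increment and Read. In its sequential specification, each Read returns a value $x$ with $v/k\le x\le kv$, where $v$ is the number of preceding Increments. It is $m$-bounded if attention is restricted to executions with at most $m$ Increments. Algorithm A has one shared max-register $\mathit{logNumIncrems}$ with initial value $-1$. Each process has local variables $\mathit{lcounter}=0$, $\mathit{threshold}=1$ and $\mathit{nextVal}=0$. Increment(): - $\mathit{lcounter}\gets\mathit{lcounter}+1$. - If $\mathit{lcounter}=\mathit{threshold}$, then: - $\mathit{logNumIncrems}$.MaxWrite$(\mathit{nextVal})$; - $\mathit{nextVal}\gets \mathit{nextVal}+1$; - $\mathit{lcounter}\gets0$;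 - if $\mathit{nextVal}\ge2$, then $\mathit{threshold}\gets2\cdot\mathit{threshold}$. Read(): - $r\gets\mathit{logNumIncrems}$.MaxRead(). - If $r\ge0$, return $k\cdot2^r$; otherwise return $0$. *)

theory Defs
  imports Complex_Main
begin

text \<open>A history is a finite sequence of invocation and response events; processes are
  natural numbers.  An operation is identified by the index of its invocation event.\<close>

datatype ('a, 'r) hev = HInv nat 'a | HRes nat 'r

fun hproc :: "('a, 'r) hev \<Rightarrow> nat" where
  "hproc (HInv p _) = p"
| "hproc (HRes p _) = p"

fun is_HInv :: "('a, 'r) hev \<Rightarrow> bool" where
  "is_HInv (HInv _ _) = True"
| "is_HInv (HRes _ _) = False"

fun inv_arg :: "('a, 'r) hev \<Rightarrow> 'a" where
  "inv_arg (HInv _ a) = a"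

definition well_formed :: "('a, 'r) hev list \<Rightarrow> bool" where
  "well_formed h \<longleftrightarrow>
     (\<forall>p. let hp = filter (\<lambda>e. hproc e = p) h in
          \<forall>i < length hp. (even i \<longleftrightarrow> is_HInv (hp ! i)))"

definition op_inv :: "('a, 'r) hev list \<Rightarrow> nat \<Rightarrow> bool" where
  "op_inv h i \<longleftrightarrow> i < length h \<and> is_HInv (h ! i)"

definition resp_at :: "('a, 'r) hev list \<Rightarrow> nat \<Rightarrow> nat \<Rightarrow> bool" where
  "resp_at h i j \<longleftrightarrow> op_inv h i \<and> i < j \<and> j < length h \<and>
     hproc (h ! j) = hproc (h ! i) \<and> \<not> is_HInv (h ! j) \<and>
     (\<forall>l. i < l \<and> l < j \<longrightarrow> hproc (h ! l) \<noteq> hproc (h ! i))"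

text \<open>Linearizability w.r.t. a sequential specification \<open>legal\<close> (a set of sequences of
  operation/response pairs): the complete operations and some incomplete ones (the list
  \<open>L\<close>), with responses \<open>ret\<close> (the actual ones for complete operations), are totally
  ordered so that real-time order is respected and the sequence is legal.\<close>
definition linearizable :: "(('a \<times> 'r) list \<Rightarrow> bool) \<Rightarrow> ('a, 'r) hev list \<Rightarrow> bool" where
  "linearizable legal h \<longleftrightarrow> well_formed h \<and>
    (\<exists>(L :: nat list) (ret :: nat \<Rightarrow> 'r).
       distinct L \<and>
       (\<forall>i \<in> set L. op_inv h i) \<and>
       (\<forall>i j. resp_at h i j \<longrightarrow> i \<in> set L \<and> h ! j = HRes (hproc (h ! i)) (ret i)) \<and>
       (\<forall>a b. a < length L \<longrightarrow> b < length L \<longrightarrow>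
              (\<exists>j. resp_at h (L ! b) j \<and> j < L ! a) \<longrightarrow> b < a) \<and>
       legal (map (\<lambda>i. (inv_arg (h ! i), ret i)) L))"

datatype mop = MW int | MR
datatype mres = MAck | MVal int

definition mr_writes :: "(mop \<times> mres) list \<Rightarrow> int set" where
  "mr_writes s = {v. \<exists>r. (MW v, r) \<in> set s}"

definition mr_value :: "(mop \<times> mres) list \<Rightarrow> int" where
  "mr_value s = (if mr_writes s = {} then -1 else Max (mr_writes s))"

definition maxreg_legal :: "(mop \<times> mres) list \<Rightarrow> bool" where
  "maxreg_legal s \<longleftrightarrow> (\<forall>j < length s.
     snd (s ! j) = (case fst (s ! j) of MW v \<Rightarrow> MAck | MR \<Rightarrow> MVal (mr_value (take j s))))"

datatype cop = CInc | CRead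
datatype cres = CAck | CVal real

definition num_inc :: "(cop \<times> cres) list \<Rightarrow> nat" where
  "num_inc s = length (filter (\<lambda>x. fst x = CInc) s)"

definition counter_legal :: "real \<Rightarrow> (cop \<times> cres) list \<Rightarrow> bool" where
  "counter_legal k s \<longleftrightarrow> (\<forall>j < length s.
     (case fst (s ! j) of
        CInc \<Rightarrow> snd (s ! j) = CAck
      | CRead \<Rightarrow> (\<exists>x. snd (s ! j) = CVal x \<and>
                   real (num_inc (take j s)) / k \<le> x \<and> x \<le> k * real (num_inc (take j s)))))"

text \<open>Events (steps) of an execution.  \<open>MWInv\<close>/\<open>MRInv\<close>/\<open>MWResp\<close>/\<open>MRResp\<close> are invocations and
  responses of operations on the max-register \<open>logNumIncrems\<close>; \<open>MStep\<close> is an internal step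
  of the (arbitrary, black-box) max-register implementation taken by the process.\<close>
datatype ev =
    InvInc nat | InvRead nat
  | MWInv nat int | MRInv nat | MStep nat | MWResp nat | MRResp nat int
  | RespInc nat | RespRead nat real

fun eproc :: "ev \<Rightarrow> nat" where
  "eproc (InvInc p) = p" | "eproc (InvRead p) = p" | "eproc (MWInv p _) = p"
| "eproc (MRInv p) = p" | "eproc (MStep p) = p" | "eproc (MWResp p) = p"
| "eproc (MRResp p _) = p" | "eproc (RespInc p) = p" | "eproc (RespRead p _) = p"

datatype phase = Idle | IncStart | IncInMW | IncEnd | ReadStart | ReadInMR | ReadEnd int

record lstate =
  lcounter :: nat
  threshold :: nat
  nextVal :: int
  phase :: phase

definition init_lstate :: lstate where
  "init_lstate = \<lparr>lcounter = 0, threshold = 1, nextVal = 0, phase = Idle\<rparr>"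

fun astep :: "real \<Rightarrow> lstate \<Rightarrow> ev \<Rightarrow> lstate option" where
  "astep k s (InvInc _) =
     (if phase s = Idle then Some (s\<lparr>phase := IncStart\<rparr>) else None)"
| "astep k s (MWInv _ v) =
     (if phase s = IncStart \<and> lcounter s + 1 = threshold s \<and> v = nextVal s
      then Some (s\<lparr>lcounter := lcounter s + 1, phase := IncInMW\<rparr>) else None)"
| "astep k s (MWResp _) =
     (if phase s = IncInMW
      then Some (s\<lparr>nextVal := nextVal s + 1, lcounter := 0,
                   threshold := (if nextVal s + 1 \<ge> 2 then 2 * threshold s else threshold s),
                   phase := IncEnd\<rparr>)
      else None)"
| "astep k s (RespInc _) =
     (if phase s = IncEnd then Some (s\<lparr>phase := Idle\<rparr>)
      else if phase s = IncStart \<and> lcounter s + 1 \<noteq> threshold s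
      then Some (s\<lparr>lcounter := lcounter s + 1, phase := Idle\<rparr>)
      else None)"
| "astep k s (InvRead _) =
     (if phase s = Idle then Some (s\<lparr>phase := ReadStart\<rparr>) else None)"
| "astep k s (MRInv _) =
     (if phase s = ReadStart then Some (s\<lparr>phase := ReadInMR\<rparr>) else None)"
| "astep k s (MRResp _ r) =
     (if phase s = ReadInMR then Some (s\<lparr>phase := ReadEnd r\<rparr>) else None)"
| "astep k s (RespRead _ x) =
     (case phase s of
        ReadEnd r \<Rightarrow> (if x = (if r \<ge> 0 then k * 2 ^ nat r else 0)
                      then Some (s\<lparr>phase := Idle\<rparr>) else None)
      | _ \<Rightarrow> None)"
| "astep k s (MStep _) =
     (if phase s = IncInMW \<or> phase s = ReadInMR then Some s else None)"

fun arun :: "real \<Rightarrow> lstate \<Rightarrow> ev list \<Rightarrow> lstate option" where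
  "arun k s [] = Some s"
| "arun k s (e # es) = (case astep k s e of None \<Rightarrow> None | Some s' \<Rightarrow> arun k s' es)"

definition is_exec :: "nat \<Rightarrow> real \<Rightarrow> ev list \<Rightarrow> bool" where
  "is_exec n k es \<longleftrightarrow> (\<forall>e \<in> set es. eproc e < n) \<and>
     (\<forall>p < n. arun k init_lstate (filter (\<lambda>e. eproc e = p) es) \<noteq> None)"

fun mhist_ev :: "ev \<Rightarrow> (mop, mres) hev option" where
  "mhist_ev (MWInv p v) = Some (HInv p (MW v))"
| "mhist_ev (MRInv p) = Some (HInv p MR)"
| "mhist_ev (MWResp p) = Some (HRes p MAck)"
| "mhist_ev (MRResp p r) = Some (HRes p (MVal r))"
| "mhist_ev _ = None"

fun chist_ev :: "ev \<Rightarrow> (cop, cres) hev option" where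
  "chist_ev (InvInc p) = Some (HInv p CInc)"
| "chist_ev (InvRead p) = Some (HInv p CRead)"
| "chist_ev (RespInc p) = Some (HRes p CAck)"
| "chist_ev (RespRead p x) = Some (HRes p (CVal x))"
| "chist_ev _ = None"

definition mhist :: "ev list \<Rightarrow> (mop, mres) hev list" where
  "mhist es = List.map_filter mhist_ev es"

definition chist :: "ev list \<Rightarrow> (cop, cres) hev list" where
  "chist es = List.map_filter chist_ev es"

definition num_incs :: "ev list \<Rightarrow> nat" where
  "num_incs es = length (filter (\<lambda>e. \<exists>p. e = InvInc p) es)"

definition is_cresp :: "ev \<Rightarrow> bool" where
  "is_cresp e \<longleftrightarrow> (\<exists>p. e = RespInc p) \<or> (\<exists>p x. e = RespRead p x)"

definition is_cinv :: "ev \<Rightarrow> bool" where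
  "is_cinv e \<longleftrightarrow> (\<exists>p. e = InvInc p) \<or> (\<exists>p. e = InvRead p)"

definition is_mresp :: "ev \<Rightarrow> bool" where
  "is_mresp e \<longleftrightarrow> (\<exists>p. e = MWResp p) \<or> (\<exists>p r. e = MRResp p r)"

definition is_minv :: "ev \<Rightarrow> bool" where
  "is_minv e \<longleftrightarrow> (\<exists>p v. e = MWInv p v) \<or> (\<exists>p. e = MRInv p)"

text \<open>\<open>seg_steps P es i\<close>: number of steps of the process of event \<open>es ! i\<close>, from position
  \<open>i\<close> up to and including its first subsequent step satisfying \<open>P\<close> (or up to the end of
  the execution if there is none): the step count of the operation invoked at \<open>i\<close>.\<close>
definition seg_steps :: "(ev \<Rightarrow> bool) \<Rightarrow> ev list \<Rightarrow> nat \<Rightarrow> nat" where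
  "seg_steps P es i = card {l. i \<le> l \<and> l < length es \<and> eproc (es ! l) = eproc (es ! i) \<and>
      (\<forall>l'. i < l' \<and> l' < l \<longrightarrow> \<not> (eproc (es ! l') = eproc (es ! i) \<and> P (es ! l')))}"

definition maxreg_wait_free :: "(nat \<Rightarrow> ev) \<Rightarrow> bool" where
  "maxreg_wait_free f \<longleftrightarrow> (\<forall>t. is_minv (f t) \<and> infinite {t'. eproc (f t') = eproc (f t)} \<longrightarrow>
      (\<exists>t' > t. eproc (f t') = eproc (f t) \<and> is_mresp (f t')))"

end

theory Submission
  imports Defs "HOL-Library.Product_Lexorder" "HOL-Library.Infinite_Set"
begin


definition posl :: "('e \<Rightarrow> 'h option) \<Rightarrow> 'e list \<Rightarrow> nat list" where
  "posl f es = filter (\<lambda>t. f (es!t) \<noteq> None) [0..<length es]"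

definition idx :: "('e \<Rightarrow> 'h option) \<Rightarrow> 'e list \<Rightarrow> nat \<Rightarrow> nat" where
  "idx f es j = length (filter (\<lambda>t. f (es!t) \<noteq> None) [0..<j])"

lemma mf_eq: "List.map_filter f es = map (\<lambda>t. the (f (es!t))) (posl f es)"
proof -
  have "es = map (nth es) [0..<length es]" by (simp add: map_nth)
  then have "List.map_filter f es = List.map_filter f (map (nth es) [0..<length es])" by simp
  also have "\<dots> = map (\<lambda>t. the (f (es!t))) (posl f es)"
    unfolding map_filter_def posl_def by (simp add: filter_map comp_def)
  finally show ?thesis .
qed

lemma posl_sorted: "sorted_wrt (<) (posl f es)"
  unfolding posl_def by (rule sorted_wrt_filter) simp

lemma posl_mono: "a < b \<Longrightarrow> b < length (posl f es) \<Longrightarrow> posl f es ! a < posl f es ! b"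
  using posl_sorted sorted_wrt_nth_less by blast

lemma posl_mono_iff: "a < length (posl f es) \<Longrightarrow> b < length (posl f es) \<Longrightarrow>
   (posl f es ! a < posl f es ! b) = (a < b)"
proof (cases a b rule: linorder_cases)
  case greater
  assume "a < length (posl f es)"
  then show ?thesis using greater posl_mono[of b a f es] by auto
qed (auto intro: posl_mono)

lemma posl_nth: "a < length (posl f es) \<Longrightarrow> posl f es ! a < length es \<and> f (es ! (posl f es ! a)) \<noteq> None"
proof -
  assume "a < length (posl f es)"
  then have "posl f es ! a \<in> set (posl f es)" by simp
  then show ?thesis unfolding posl_def by auto
qed

lemma idx_posl: "j < length es \<Longrightarrow> f (es!j) \<noteq> None \<Longrightarrow>
    idx f es j < length (posl f es) \<and> posl f es ! idx f es j = j"
proof -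
  assume j: "j < length es" "f (es!j) \<noteq> None"
  have "[0..<length es] = [0..<j] @ [j] @ [Suc j..<length es]"
  proof -
    have "[0..<length es] = [0..<j] @ [j..<length es]" using j(1) upt_add_eq_append[of 0 j "length es - j"] by simp
    also have "[j..<length es] = [j] @ [Suc j..<length es]" using j(1) upt_conv_Cons by simp
    finally show ?thesis .
  qed
  then have "posl f es = filter (\<lambda>t. f (es!t) \<noteq> None) [0..<j] @ [j] @ filter (\<lambda>t. f (es!t) \<noteq> None) [Suc j..<length es]"
    unfolding posl_def using j(2) by simp
  then show ?thesis unfolding idx_def by (simp add: nth_append)
qed

lemma posl_idx: "a < length (posl f es) \<Longrightarrow> idx f es (posl f es ! a) = a"
proof -
  assume a: "a < length (posl f es)"
  note pn = posl_nth[OF a]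
  note ip = idx_posl[of "posl f es ! a" es f, OF conjunct1[OF pn] conjunct2[OF pn]]
  show ?thesis using ip a posl_mono[of "idx f es (posl f es ! a)" a f es] posl_mono[of a "idx f es (posl f es ! a)" f es]
    by (cases "idx f es (posl f es ! a)" a rule: linorder_cases) auto
qed

lemma idx_mono: "j < length es \<Longrightarrow> f (es!j) \<noteq> None \<Longrightarrow> j' < length es \<Longrightarrow> f (es!j') \<noteq> None \<Longrightarrow>
   (idx f es j < idx f es j') = (j < j')"
  by (metis idx_posl[of j es f] idx_posl[of j' es f] posl_mono_iff)

lemma idx_inj: "j < length es \<Longrightarrow> f (es!j) \<noteq> None \<Longrightarrow> j' < length es \<Longrightarrow> f (es!j') \<noteq> None \<Longrightarrow>
   (idx f es j = idx f es j') = (j = j')"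
  by (metis idx_posl)

lemma resp_at_pos:
  assumes hp: "\<And>e x. f e = Some x \<Longrightarrow> hproc x = eproc e"
    and j: "j < length es" "f (es!j) \<noteq> None" and l: "l < length es" "f (es!l) \<noteq> None"
  shows "resp_at (List.map_filter f es) (idx f es j) (idx f es l) \<longleftrightarrow>
     j < l \<and> is_HInv (the (f (es!j))) \<and> \<not> is_HInv (the (f (es!l))) \<and> eproc (es!l) = eproc (es!j) \<and>
     (\<forall>x. j < x \<and> x < l \<and> f (es!x) \<noteq> None \<longrightarrow> eproc (es!x) \<noteq> eproc (es!j))"
proof -
  let ?P = "posl f es" and ?h = "List.map_filter f es"
  note ij = idx_posl[of j es f, OF j] and il = idx_posl[of l es f, OF l]
  have hn: "\<And>a. a < length ?P \<Longrightarrow> ?h ! a = the (f (es ! (?P ! a)))" by (simp add: mf_eq)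
  have hl: "length ?h = length ?P" by (simp add: mf_eq)
  have hpr: "\<And>a. a < length ?P \<Longrightarrow> hproc (?h ! a) = eproc (es ! (?P ! a))"
    using hn hp posl_nth by fastforce
  have mid: "(\<forall>x. idx f es j < x \<and> x < idx f es l \<longrightarrow> hproc (?h ! x) \<noteq> hproc (?h ! idx f es j)) \<longleftrightarrow>
     (\<forall>x. j < x \<and> x < l \<and> f (es!x) \<noteq> None \<longrightarrow> eproc (es!x) \<noteq> eproc (es!j))"
  proof
    assume H: "\<forall>x. idx f es j < x \<and> x < idx f es l \<longrightarrow> hproc (?h ! x) \<noteq> hproc (?h ! idx f es j)"
    show "\<forall>x. j < x \<and> x < l \<and> f (es!x) \<noteq> None \<longrightarrow> eproc (es!x) \<noteq> eproc (es!j)"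
    proof (intro allI impI)
      fix x assume x: "j < x \<and> x < l \<and> f (es!x) \<noteq> None"
      then have xl: "x < length es" using l by simp
      note ix = idx_posl[of x es f, OF xl]
      have "idx f es j < idx f es x" "idx f es x < idx f es l"
        using idx_mono[of j es f x] idx_mono[of x es f l] x j l xl by auto
      with H have "hproc (?h ! idx f es x) \<noteq> hproc (?h ! idx f es j)" by blast
      then show "eproc (es!x) \<noteq> eproc (es!j)" using hpr ix ij x by auto
    qed
  next
    assume H: "\<forall>x. j < x \<and> x < l \<and> f (es!x) \<noteq> None \<longrightarrow> eproc (es!x) \<noteq> eproc (es!j)"
    show "\<forall>x. idx f es j < x \<and> x < idx f es l \<longrightarrow> hproc (?h ! x) \<noteq> hproc (?h ! idx f es j)"
    proof (intro allI impI)
      fix x assume x: "idx f es j < x \<and> x < idx f es l"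
      then have xP: "x < length ?P" using il by simp
      have "j < ?P ! x" using posl_mono[of "idx f es j" x f es] x xP ij by auto
      moreover have "?P ! x < l" using posl_mono[of x "idx f es l" f es] x il by auto
      ultimately have "eproc (es!(?P!x)) \<noteq> eproc (es!j)" using H posl_nth[OF xP] by blast
      then show "hproc (?h ! x) \<noteq> hproc (?h ! idx f es j)" using hpr xP ij by auto
    qed
  qed
  have o1: "op_inv ?h (idx f es j) = is_HInv (the (f (es!j)))" unfolding op_inv_def hl using ij hn by auto
  have o2: "(idx f es j < idx f es l) = (j < l)" using idx_mono[of j es f l] j l by blast
  have o3: "?h ! idx f es l = the (f (es!l))" "?h ! idx f es j = the (f (es!j))" using ij il hn by auto
  have o4: "hproc (?h ! idx f es l) = eproc (es!l)" "hproc (?h ! idx f es j) = eproc (es!j)" using ij il hpr by auto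
  have R: "resp_at ?h (idx f es j) (idx f es l) = (op_inv ?h (idx f es j) \<and> idx f es j < idx f es l \<and>
     idx f es l < length ?h \<and> hproc (?h ! idx f es l) = hproc (?h ! idx f es j) \<and> \<not> is_HInv (?h ! idx f es l) \<and>
     (\<forall>x. idx f es j < x \<and> x < idx f es l \<longrightarrow> hproc (?h ! x) \<noteq> hproc (?h ! idx f es j)))"
    unfolding resp_at_def by (rule refl)
  have il2: "idx f es l < length ?h" using il hl by simp
  show ?thesis
  proof -
    have mid2: "(\<forall>x. idx f es j < x \<and> x < idx f es l \<longrightarrow> hproc (?h ! x) \<noteq> eproc (es!j)) \<longleftrightarrow>
     (\<forall>x. j < x \<and> x < l \<and> f (es!x) \<noteq> None \<longrightarrow> eproc (es!x) \<noteq> eproc (es!j))" using mid o4 by simp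
    have o5: "hproc (the (f (es!l))) = eproc (es!l)" using o4 o3 by simp
    show ?thesis unfolding R o4 o3(1) o1 o2 o5 mid2 using il2 by blast
  qed
qed

lemma resp_at_unique: "resp_at h i j \<Longrightarrow> resp_at h i j' \<Longrightarrow> j = j'"
proof (rule ccontr)
  assume a: "resp_at h i j" "resp_at h i j'" "j \<noteq> j'"
  have A: "i < j" "hproc (h!j) = hproc (h!i)" "\<forall>l. i < l \<and> l < j \<longrightarrow> hproc (h ! l) \<noteq> hproc (h ! i)"
    using a(1) unfolding resp_at_def by auto
  have B: "i < j'" "hproc (h!j') = hproc (h!i)" "\<forall>l. i < l \<and> l < j' \<longrightarrow> hproc (h ! l) \<noteq> hproc (h ! i)"
    using a(2) unfolding resp_at_def by auto
  show False
  proof (cases "j < j'")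
    case True then show ?thesis using A B by blast
  next
    case False then have "j' < j" using a(3) by simp
    then show ?thesis using A B by blast
  qed
qed


definition pst :: "real \<Rightarrow> ev list \<Rightarrow> nat \<Rightarrow> nat \<Rightarrow> lstate" where
  "pst k es p t = the (arun k init_lstate (filter (\<lambda>e. eproc e = p) (take t es)))"

lemma arun_append: "arun k s (xs @ ys) = (case arun k s xs of None \<Rightarrow> None | Some s' \<Rightarrow> arun k s' ys)"
  by (induction xs arbitrary: s) (auto split: option.splits)

lemma arun_prefix: "arun k s (xs @ ys) \<noteq> None \<Longrightarrow> arun k s xs \<noteq> None"
  by (simp add: arun_append split: option.splits)

lemma A_InvInc: "astep k s (InvInc q) = Some s' \<Longrightarrow> phase s = Idle \<and> s' = s\<lparr>phase := IncStart\<rparr>"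
  by (auto split: if_splits)
lemma A_InvRead: "astep k s (InvRead q) = Some s' \<Longrightarrow> phase s = Idle \<and> s' = s\<lparr>phase := ReadStart\<rparr>"
  by (auto split: if_splits)
lemma A_MWInv: "astep k s (MWInv q v) = Some s' \<Longrightarrow> phase s = IncStart \<and> lcounter s + 1 = threshold s \<and>
   v = nextVal s \<and> s' = s\<lparr>lcounter := lcounter s + 1, phase := IncInMW\<rparr>"
  by (auto split: if_splits)
lemma A_MWResp: "astep k s (MWResp q) = Some s' \<Longrightarrow> phase s = IncInMW \<and>
   s' = s\<lparr>nextVal := nextVal s + 1, lcounter := 0,
          threshold := (if nextVal s + 1 \<ge> 2 then 2 * threshold s else threshold s), phase := IncEnd\<rparr>"
  by (auto split: if_splits)
lemma A_RespInc: "astep k s (RespInc q) = Some s' \<Longrightarrow>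
   (phase s = IncEnd \<and> s' = s\<lparr>phase := Idle\<rparr>) \<or>
   (phase s = IncStart \<and> lcounter s + 1 \<noteq> threshold s \<and> s' = s\<lparr>lcounter := lcounter s + 1, phase := Idle\<rparr>)"
  by (auto split: if_splits)
lemma A_MRInv: "astep k s (MRInv q) = Some s' \<Longrightarrow> phase s = ReadStart \<and> s' = s\<lparr>phase := ReadInMR\<rparr>"
  by (auto split: if_splits)
lemma A_MRResp: "astep k s (MRResp q r) = Some s' \<Longrightarrow> phase s = ReadInMR \<and> s' = s\<lparr>phase := ReadEnd r\<rparr>"
  by (auto split: if_splits)
lemma A_RespRead: "astep k s (RespRead q x) = Some s' \<Longrightarrow>
   \<exists>r. phase s = ReadEnd r \<and> x = (if r \<ge> 0 then k * 2 ^ nat r else 0) \<and> s' = s\<lparr>phase := Idle\<rparr>"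
  by (cases "phase s") (auto split: if_splits)
lemma A_MStep: "astep k s (MStep q) = Some s' \<Longrightarrow> (phase s = IncInMW \<or> phase s = ReadInMR) \<and> s' = s"
  by (auto split: if_splits)

lemma P_IncStart: "phase s = IncStart \<Longrightarrow> astep k s e = Some s' \<Longrightarrow> (\<exists>q v. e = MWInv q v) \<or> (\<exists>q. e = RespInc q)"
  by (cases e) (auto split: if_splits phase.splits)
lemma P_IncInMW: "phase s = IncInMW \<Longrightarrow> astep k s e = Some s' \<Longrightarrow> (\<exists>q. e = MWResp q) \<or> (\<exists>q. e = MStep q)"
  by (cases e) (auto split: if_splits phase.splits)
lemma P_IncEnd: "phase s = IncEnd \<Longrightarrow> astep k s e = Some s' \<Longrightarrow> (\<exists>q. e = RespInc q)"
  by (cases e) (auto split: if_splits phase.splits)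
lemma P_ReadStart: "phase s = ReadStart \<Longrightarrow> astep k s e = Some s' \<Longrightarrow> (\<exists>q. e = MRInv q)"
  by (cases e) (auto split: if_splits phase.splits)
lemma P_ReadInMR: "phase s = ReadInMR \<Longrightarrow> astep k s e = Some s' \<Longrightarrow> (\<exists>q r. e = MRResp q r) \<or> (\<exists>q. e = MStep q)"
  by (cases e) (auto split: if_splits phase.splits)
lemma P_ReadEnd: "phase s = ReadEnd r \<Longrightarrow> astep k s e = Some s' \<Longrightarrow> (\<exists>q x. e = RespRead q x)"
  by (cases e) (auto split: if_splits phase.splits)
lemma P_Idle: "phase s = Idle \<Longrightarrow> astep k s e = Some s' \<Longrightarrow> (\<exists>q. e = InvInc q) \<or> (\<exists>q. e = InvRead q)"
  by (cases e) (auto split: if_splits phase.splits)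

definition cnt :: "ev list \<Rightarrow> nat \<Rightarrow> nat \<Rightarrow> nat" where
  "cnt es p t = length (filter (\<lambda>e. e = InvInc p) (take t es))"

definition wv :: "int \<Rightarrow> nat" where "wv v = (if v = 0 then 0 else 2 ^ (nat v - 1))"

lemma cnt_Suc: "t < length es \<Longrightarrow> cnt es p (Suc t) = cnt es p t + (if es!t = InvInc p then 1 else 0)"
  unfolding cnt_def by (simp add: take_Suc_conv_app_nth)

locale exe =
  fixes n :: nat and k :: real and es :: "ev list"
  assumes ex: "is_exec n k es"
begin

abbreviation "ps p t \<equiv> pst k es p t"

lemma procs: "e \<in> set es \<Longrightarrow> eproc e < n" using ex unfolding is_exec_def by auto

lemma run_Some: assumes t: "t \<le> length es"
  shows "arun k init_lstate (filter (\<lambda>e. eproc e = p) (take t es)) = Some (ps p t)"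
proof (cases "p < n")
  case True
  have "arun k init_lstate (filter (\<lambda>e. eproc e = p) es) \<noteq> None" using ex True unfolding is_exec_def by auto
  moreover have "filter (\<lambda>e. eproc e = p) es = filter (\<lambda>e. eproc e = p) (take t es) @ filter (\<lambda>e. eproc e = p) (drop t es)"
    by (metis append_take_drop_id filter_append)
  ultimately have "arun k init_lstate (filter (\<lambda>e. eproc e = p) (take t es)) \<noteq> None" using arun_prefix by metis
  then show ?thesis unfolding pst_def by auto
next
  case False
  have "\<forall>e\<in>set (take t es). eproc e \<noteq> p" using False by (auto dest!: in_set_takeD procs)
  then have "filter (\<lambda>e. eproc e = p) (take t es) = []" by (simp add: filter_empty_conv)
  then show ?thesis unfolding pst_def by simp
qed

lemma ps0: "ps p 0 = init_lstate" unfolding pst_def by simp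

lemma pstep: assumes "t < length es" "eproc (es!t) = p"
  shows "astep k (ps p t) (es!t) = Some (ps p (Suc t))"
proof -
  have f: "filter (\<lambda>e. eproc e = p) (take (Suc t) es) = filter (\<lambda>e. eproc e = p) (take t es) @ [es!t]"
    using assms by (simp add: take_Suc_conv_app_nth)
  have "arun k init_lstate (filter (\<lambda>e. eproc e = p) (take (Suc t) es)) = Some (ps p (Suc t))"
    using run_Some assms by simp
  then have "arun k (ps p t) [es!t] = Some (ps p (Suc t))"
    unfolding f arun_append using run_Some[of t p] assms by simp
  then show ?thesis by (simp split: option.splits)
qed

lemma nostep: "t < length es \<Longrightarrow> eproc (es!t) \<noteq> p \<Longrightarrow> ps p (Suc t) = ps p t"
  unfolding pst_def by (simp add: take_Suc_conv_app_nth)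

lemma ps_const: "t \<le> t' \<Longrightarrow> t' \<le> length es \<Longrightarrow>
   (\<forall>l. t \<le> l \<and> l < t' \<and> eproc (es!l) = p \<longrightarrow> es!l = MStep p) \<Longrightarrow> ps p t' = ps p t"
proof (induction t' rule: dec_induct)
  case base then show ?case by simp
next
  case (step m)
  have "ps p (Suc m) = ps p m"
  proof (cases "eproc (es!m) = p")
    case True
    then have "es!m = MStep p" using step by auto
    moreover have "astep k (ps p m) (es!m) = Some (ps p (Suc m))" using pstep[of m p] step True by simp
    ultimately have "astep k (ps p m) (MStep p) = Some (ps p (Suc m))" by simp
    then show ?thesis using A_MStep by blast
  next
    case False then show ?thesis using nostep step by auto
  qed
  then show ?case using step by auto
qed

definition hasN :: "nat \<Rightarrow> nat \<Rightarrow> bool" where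
  "hasN p t \<longleftrightarrow> (\<exists>t'. t < t' \<and> t' < length es \<and> eproc (es!t') = p \<and> es!t' \<noteq> MStep p)"

definition nxN :: "nat \<Rightarrow> nat \<Rightarrow> nat" where
  "nxN p t = (LEAST t'. t < t' \<and> t' < length es \<and> eproc (es!t') = p \<and> es!t' \<noteq> MStep p)"

lemma nxN: assumes "hasN p t"
  shows "t < nxN p t" "nxN p t < length es" "eproc (es!nxN p t) = p" "es!nxN p t \<noteq> MStep p"
    "\<And>l. t < l \<Longrightarrow> l < nxN p t \<Longrightarrow> eproc (es!l) = p \<Longrightarrow> es!l = MStep p"
proof -
  let ?P = "\<lambda>t'. t < t' \<and> t' < length es \<and> eproc (es!t') = p \<and> es!t' \<noteq> MStep p"
  have "?P (nxN p t)" using assms unfolding hasN_def nxN_def by (rule LeastI_ex)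
  then show "t < nxN p t" "nxN p t < length es" "eproc (es!nxN p t) = p" "es!nxN p t \<noteq> MStep p" by auto
  fix l assume l: "t < l" "l < nxN p t" "eproc (es!l) = p"
  have "\<not> ?P l" using l(2) unfolding nxN_def by (rule not_less_Least)
  then show "es!l = MStep p" using l \<open>?P (nxN p t)\<close> by auto
qed

lemma nxN_le: "t < t' \<Longrightarrow> t' < length es \<Longrightarrow> eproc (es!t') = p \<Longrightarrow> es!t' \<noteq> MStep p \<Longrightarrow> hasN p t \<and> nxN p t \<le> t'"
  unfolding hasN_def nxN_def by (auto intro: Least_le)

lemma nxN_state: "hasN p t \<Longrightarrow> ps p (nxN p t) = ps p (Suc t)"
  using nxN[of p t] by (intro ps_const) auto

lemma nxN_step: "hasN p t \<Longrightarrow> astep k (ps p (Suc t)) (es!nxN p t) = Some (ps p (Suc (nxN p t)))"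
  using nxN[of p t] pstep nxN_state by metis

end


context exe begin

lemma C_InvInc: assumes "es!t = InvInc p" "t < length es" "hasN p t"
  shows "(\<exists>v. es!(nxN p t) = MWInv p v) \<or> (es!(nxN p t) = RespInc p \<and> phase (ps p (nxN p t)) = IncStart)"
proof -
  have st0: "astep k (ps p t) (es!t) = Some (ps p (Suc t))" using assms by (intro pstep) auto
  have ph: "phase (ps p (Suc t)) = IncStart" using A_InvInc[OF st0[unfolded assms(1)]] by simp
  have st: "astep k (ps p (Suc t)) (es!nxN p t) = Some (ps p (Suc (nxN p t)))" using nxN_step assms(3) .
  have ep: "eproc (es!nxN p t) = p" using nxN assms(3) by blast
  from P_IncStart[OF ph st] ep show ?thesis using nxN_state[OF assms(3)] ph by auto
qed

lemma C_InvRead: assumes "es!t = InvRead p" "t < length es" "hasN p t"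
  shows "es!(nxN p t) = MRInv p"
proof -
  have st0: "astep k (ps p t) (es!t) = Some (ps p (Suc t))" using assms by (intro pstep) auto
  have ph: "phase (ps p (Suc t)) = ReadStart" using A_InvRead[OF st0[unfolded assms(1)]] by simp
  have st: "astep k (ps p (Suc t)) (es!nxN p t) = Some (ps p (Suc (nxN p t)))" using nxN_step assms(3) .
  have ep: "eproc (es!nxN p t) = p" using nxN assms(3) by blast
  from P_ReadStart[OF ph st] ep show ?thesis by auto
qed

lemma C_MWInv: assumes "es!t = MWInv p v" "t < length es" "hasN p t"
  shows "es!(nxN p t) = MWResp p"
proof -
  have st0: "astep k (ps p t) (es!t) = Some (ps p (Suc t))" using assms by (intro pstep) auto
  have ph: "phase (ps p (Suc t)) = IncInMW" using A_MWInv[OF st0[unfolded assms(1)]] by simp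
  have st: "astep k (ps p (Suc t)) (es!nxN p t) = Some (ps p (Suc (nxN p t)))" using nxN_step assms(3) .
  have ep: "eproc (es!nxN p t) = p" "es!nxN p t \<noteq> MStep p" using nxN assms(3) by blast+
  from P_IncInMW[OF ph st] ep show ?thesis by auto
qed

lemma C_MRInv: assumes "es!t = MRInv p" "t < length es" "hasN p t"
  shows "\<exists>r. es!(nxN p t) = MRResp p r"
proof -
  have st0: "astep k (ps p t) (es!t) = Some (ps p (Suc t))" using assms by (intro pstep) auto
  have ph: "phase (ps p (Suc t)) = ReadInMR" using A_MRInv[OF st0[unfolded assms(1)]] by simp
  have st: "astep k (ps p (Suc t)) (es!nxN p t) = Some (ps p (Suc (nxN p t)))" using nxN_step assms(3) .
  have ep: "eproc (es!nxN p t) = p" "es!nxN p t \<noteq> MStep p" using nxN assms(3) by blast+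
  from P_ReadInMR[OF ph st] ep show ?thesis by auto
qed

lemma C_MWResp: assumes "es!t = MWResp p" "t < length es" "hasN p t"
  shows "es!(nxN p t) = RespInc p"
proof -
  have st0: "astep k (ps p t) (es!t) = Some (ps p (Suc t))" using assms by (intro pstep) auto
  have ph: "phase (ps p (Suc t)) = IncEnd" using A_MWResp[OF st0[unfolded assms(1)]] by simp
  have st: "astep k (ps p (Suc t)) (es!nxN p t) = Some (ps p (Suc (nxN p t)))" using nxN_step assms(3) .
  have ep: "eproc (es!nxN p t) = p" using nxN assms(3) by blast
  from P_IncEnd[OF ph st] ep show ?thesis by auto
qed

lemma C_MRResp: assumes "es!t = MRResp p r" "t < length es" "hasN p t"
  shows "es!(nxN p t) = RespRead p (if r \<ge> 0 then k * 2 ^ nat r else 0)"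
proof -
  have st0: "astep k (ps p t) (es!t) = Some (ps p (Suc t))" using assms by (intro pstep) auto
  have ph: "phase (ps p (Suc t)) = ReadEnd r" using A_MRResp[OF st0[unfolded assms(1)]] by simp
  have st: "astep k (ps p (Suc t)) (es!nxN p t) = Some (ps p (Suc (nxN p t)))" using nxN_step assms(3) .
  have ep: "eproc (es!nxN p t) = p" using nxN assms(3) by blast
  from P_ReadEnd[OF ph st] ep obtain x where x: "es!nxN p t = RespRead p x" by auto
  from A_RespRead[OF st[unfolded x]] ph x show ?thesis by auto
qed

lemma first_after: assumes "t < length es" "eproc (es!t) = p"
    "phase (ps p (Suc t)) \<noteq> IncInMW" "phase (ps p (Suc t)) \<noteq> ReadInMR"
    "t < l" "l < length es" "eproc (es!l) = p"
  shows "hasN p t \<and> nxN p t \<le> l"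
proof -
  let ?Q = "\<lambda>l. t < l \<and> l < length es \<and> eproc (es!l) = p"
  define l1 where "l1 = (LEAST l. ?Q l)"
  have q1: "?Q l1" unfolding l1_def using assms by (intro LeastI[of ?Q l]) auto
  have le: "l1 \<le> l" unfolding l1_def using assms by (intro Least_le) auto
  have nb: "\<And>x. t < x \<Longrightarrow> x < l1 \<Longrightarrow> eproc (es!x) \<noteq> p"
  proof -
    fix x assume "t < x" "x < l1"
    then have "\<not> ?Q x" unfolding l1_def using not_less_Least by blast
    then show "eproc (es!x) \<noteq> p" using \<open>x < l1\<close> q1 \<open>t < x\<close> by auto
  qed
  have "ps p l1 = ps p (Suc t)" using q1 nb by (intro ps_const) auto
  then have st: "astep k (ps p (Suc t)) (es!l1) = Some (ps p (Suc l1))" using pstep q1 by metis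
  have "es!l1 \<noteq> MStep p"
  proof
    assume "es!l1 = MStep p"
    then show False using st A_MStep assms(3,4) by fastforce
  qed
  then show ?thesis using nxN_le[of t l1 p] q1 le by auto
qed

lemma first_after_nb: assumes "t < length es" "eproc (es!t) = p"
    "phase (ps p (Suc t)) \<noteq> IncInMW" "phase (ps p (Suc t)) \<noteq> ReadInMR"
    "t < l" "l < nxN p t" "hasN p t"
  shows "eproc (es!l) \<noteq> p"
proof
  assume "eproc (es!l) = p"
  moreover have "l < length es" using assms(6) nxN(2)[OF assms(7)] by simp
  ultimately show False using first_after[OF assms(1-5)] assms(6) by auto
qed

lemma ph_after: assumes "t < length es" "eproc (es!t) = p"
  shows "(\<exists>q. es!t = InvInc q) \<or> (\<exists>q. es!t = InvRead q) \<or> (\<exists>q. es!t = MWResp q) \<or> (\<exists>q r. es!t = MRResp q r) \<or>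
     (\<exists>q. es!t = RespInc q) \<or> (\<exists>q x. es!t = RespRead q x) \<Longrightarrow>
     phase (ps p (Suc t)) \<noteq> IncInMW \<and> phase (ps p (Suc t)) \<noteq> ReadInMR"
proof -
  assume h: "(\<exists>q. es!t = InvInc q) \<or> (\<exists>q. es!t = InvRead q) \<or> (\<exists>q. es!t = MWResp q) \<or> (\<exists>q r. es!t = MRResp q r) \<or>
     (\<exists>q. es!t = RespInc q) \<or> (\<exists>q x. es!t = RespRead q x)"
  have st: "astep k (ps p t) (es!t) = Some (ps p (Suc t))" using assms by (intro pstep) auto
  from h show ?thesis
  proof (elim disjE exE)
    fix q assume e: "es!t = InvInc q" show ?thesis using A_InvInc[OF st[unfolded e]] by auto
  next
    fix q assume e: "es!t = InvRead q" show ?thesis using A_InvRead[OF st[unfolded e]] by auto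
  next
    fix q assume e: "es!t = MWResp q" show ?thesis using A_MWResp[OF st[unfolded e]] by auto
  next
    fix q r assume e: "es!t = MRResp q r" show ?thesis using A_MRResp[OF st[unfolded e]] by auto
  next
    fix q assume e: "es!t = RespInc q" show ?thesis using A_RespInc[OF st[unfolded e]] by auto
  next
    fix q x assume e: "es!t = RespRead q x" show ?thesis using A_RespRead[OF st[unfolded e]] by auto
  qed
qed

end


definition invS :: "lstate \<Rightarrow> nat \<Rightarrow> bool" where
  "invS s c \<longleftrightarrow> nextVal s \<ge> 0 \<and> threshold s = 2 ^ (nat (nextVal s) - 1) \<and>
     (phase s = IncInMW \<longrightarrow> lcounter s = threshold s) \<and> (phase s \<noteq> IncInMW \<longrightarrow> lcounter s < threshold s) \<and>
     c = lcounter s + wv (nextVal s) + (if phase s = IncStart then 1 else 0)"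

lemma wv_step: "(nv::int) \<ge> 0 \<Longrightarrow> (2::nat) ^ (nat nv - 1) + wv nv = wv (nv + 1)"
  unfolding wv_def
proof (cases "nv = 0")
  case False
  assume "nv \<ge> 0"
  then have "nat nv \<ge> 1" using False by simp
  then have "(2::nat) ^ (nat nv - 1) + 2 ^ (nat nv - 1) = 2 ^ nat nv"
    by (metis Suc_diff_1 less_le_trans mult_2 power_Suc zero_less_one)
  moreover have "nat (nv + 1) - 1 = nat nv" using \<open>nv \<ge> 0\<close> by simp
  ultimately show "(2::nat) ^ (nat nv - 1) + (if nv = 0 then 0 else 2 ^ (nat nv - 1)) =
    (if nv + 1 = 0 then 0 else 2 ^ (nat (nv + 1) - 1))" using False \<open>nv \<ge> 0\<close> by simp
qed simp

lemma th_step: "(nv::int) \<ge> 0 \<Longrightarrow> (if nv + 1 \<ge> 2 then 2 * 2 ^ (nat nv - 1) else 2 ^ (nat nv - 1)) = (2::nat) ^ (nat (nv + 1) - 1)"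
proof (cases "nv = 0")
  case False
  assume "nv \<ge> 0"
  then have "nat nv \<ge> 1" using False by simp
  then have "2 * (2::nat) ^ (nat nv - 1) = 2 ^ nat nv"
    by (metis Suc_diff_1 less_le_trans power_Suc zero_less_one)
  moreover have "nat (nv + 1) - 1 = nat nv" using \<open>nv \<ge> 0\<close> by simp
  ultimately show ?thesis using False \<open>nv \<ge> 0\<close> by simp
qed simp

lemma invS_step: assumes "invS s c" "astep k s e = Some s'"
  shows "invS s' (c + (if (\<exists>q. e = InvInc q) then 1 else 0))"
proof (cases e)
  case (InvInc q) note h = A_InvInc[OF assms(2)[unfolded InvInc]]
  then show ?thesis using assms(1) InvInc unfolding invS_def by (simp add: h)
next
  case (InvRead q) note h = A_InvRead[OF assms(2)[unfolded InvRead]]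
  then show ?thesis using assms(1) InvRead unfolding invS_def by (simp add: h)
next
  case (MWInv q v) note h = A_MWInv[OF assms(2)[unfolded MWInv]]
  then show ?thesis using assms(1) MWInv unfolding invS_def by (simp add: h)
next
  case (MRInv q) note h = A_MRInv[OF assms(2)[unfolded MRInv]]
  then show ?thesis using assms(1) MRInv unfolding invS_def by (simp add: h)
next
  case (MStep q) note h = A_MStep[OF assms(2)[unfolded MStep]]
  then show ?thesis using assms(1) MStep by simp
next
  case (MWResp q)
  then have s': "phase s = IncInMW" "s' = s\<lparr>nextVal := nextVal s + 1, lcounter := 0,
          threshold := (if nextVal s + 1 \<ge> 2 then 2 * threshold s else threshold s), phase := IncEnd\<rparr>"
    using A_MWResp[OF assms(2)[unfolded MWResp]] by auto
  have nv: "nextVal s \<ge> 0" "threshold s = 2 ^ (nat (nextVal s) - 1)" "lcounter s = threshold s"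
    "c = lcounter s + wv (nextVal s)"
    using assms(1) s'(1) unfolding invS_def by auto
  have t1: "threshold s' = (if nextVal s + 1 \<ge> 2 then 2 * 2 ^ (nat (nextVal s) - 1) else 2 ^ (nat (nextVal s) - 1))"
  proof -
    have t0: "threshold s' = (if nextVal s + 1 \<ge> 2 then 2 * threshold s else threshold s)" using s'(2) by simp
    show ?thesis unfolding t0 nv(2) by (rule refl)
  qed
  have "threshold s' = 2 ^ (nat (nextVal s') - 1)" using trans[OF t1 th_step[OF nv(1)]] s'(2) by simp
  moreover have "c = wv (nextVal s')" using s'(2) nv wv_step[OF nv(1)] by simp
  moreover have "threshold s' > 0" using calculation by simp
  ultimately show ?thesis using MWResp s' nv(1) unfolding invS_def by auto
next
  case (MRResp q r) note h = A_MRResp[OF assms(2)[unfolded MRResp]]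
  then show ?thesis using assms(1) MRResp unfolding invS_def by (simp add: h)
next
  case (RespInc q) note h = A_RespInc[OF assms(2)[unfolded RespInc]]
  then show ?thesis
  proof (elim disjE conjE)
    assume "phase s = IncEnd" "s' = s\<lparr>phase := Idle\<rparr>"
    then show ?thesis using assms(1) RespInc unfolding invS_def by simp
  next
    assume a: "phase s = IncStart" "lcounter s + 1 \<noteq> threshold s" "s' = s\<lparr>lcounter := lcounter s + 1, phase := Idle\<rparr>"
    have "lcounter s < threshold s" "c = lcounter s + wv (nextVal s) + 1" using assms(1) a(1) unfolding invS_def by auto
    then have "lcounter s + 1 < threshold s" using a(2) by linarith
    then show ?thesis using assms(1) RespInc a \<open>c = _\<close> unfolding invS_def by simp
  qed
next
  case (RespRead q x)
  obtain r where h: "phase s = ReadEnd r" "s' = s\<lparr>phase := Idle\<rparr>" using A_RespRead[OF assms(2)[unfolded RespRead]] by blast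
  then show ?thesis using assms(1) RespRead unfolding invS_def by simp
qed

context exe begin

lemma INV: "t \<le> length es \<Longrightarrow> invS (ps p t) (cnt es p t)"
proof (induction t)
  case 0 then show ?case unfolding invS_def ps0 init_lstate_def cnt_def wv_def by simp
next
  case (Suc t)
  then have t: "t < length es" by simp
  show ?case
  proof (cases "eproc (es!t) = p")
    case True
    have st: "astep k (ps p t) (es!t) = Some (ps p (Suc t))" using t True by (rule pstep)
    have "cnt es p (Suc t) = cnt es p t + (if (\<exists>q. es!t = InvInc q) then 1 else 0)"
      using cnt_Suc[OF t, of p] True by auto
    then show ?thesis using invS_step[OF Suc.IH[OF less_imp_le[OF t]] st] by simp
  next
    case False
    then have "cnt es p (Suc t) = cnt es p t" using cnt_Suc[OF t, of p] by auto
    then show ?thesis using nostep[OF t False] Suc.IH t by simp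
  qed
qed

lemma F1: assumes "es!t = MWInv p v" "t < length es"
  shows "v \<ge> 0 \<and> cnt es p t = 2 ^ nat v"
proof -
  have st0: "astep k (ps p t) (es!t) = Some (ps p (Suc t))" using assms by (intro pstep) auto
  note a = A_MWInv[OF st0[unfolded assms(1)]]
  have i: "invS (ps p t) (cnt es p t)" using INV assms by simp
  show ?thesis
  proof (cases "nextVal (ps p t) = 0")
    case True then show ?thesis using a i unfolding invS_def wv_def by auto
  next
    case False
    then have "nat (nextVal (ps p t)) \<ge> 1" using i unfolding invS_def by auto
    then have "(2::nat) ^ (nat (nextVal (ps p t)) - 1) + 2 ^ (nat (nextVal (ps p t)) - 1) = 2 ^ nat (nextVal (ps p t))"
      by (metis Suc_diff_1 less_le_trans mult_2 power_Suc zero_less_one)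
    then show ?thesis using a i False unfolding invS_def wv_def by auto
  qed
qed

lemma F2: assumes "es!t = RespInc p" "t < length es" "phase (ps p t) = IncStart"
  shows "nextVal (ps p t) \<ge> 1 \<and> cnt es p t < 2 ^ nat (nextVal (ps p t))"
proof -
  have st0: "astep k (ps p t) (es!t) = Some (ps p (Suc t))" using assms by (intro pstep) auto
  have a: "lcounter (ps p t) + 1 \<noteq> threshold (ps p t)" using A_RespInc[OF st0[unfolded assms(1)]] assms(3) by auto
  have i: "invS (ps p t) (cnt es p t)" using INV assms by simp
  have nz: "nextVal (ps p t) \<noteq> 0"
  proof
    assume "nextVal (ps p t) = 0"
    then show False using a i assms(3) unfolding invS_def by auto
  qed
  then have "nat (nextVal (ps p t)) \<ge> 1" using i unfolding invS_def by auto
  then have "(2::nat) ^ (nat (nextVal (ps p t)) - 1) + 2 ^ (nat (nextVal (ps p t)) - 1) = 2 ^ nat (nextVal (ps p t))"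
    by (metis Suc_diff_1 less_le_trans mult_2 power_Suc zero_less_one)
  then show ?thesis using a i nz assms(3) unfolding invS_def wv_def by auto
qed

end


context exe begin

definition noMS :: "nat \<Rightarrow> nat \<Rightarrow> nat \<Rightarrow> bool" where
  "noMS p a b \<longleftrightarrow> (\<forall>l. a < l \<and> l < b \<and> eproc (es!l) = p \<longrightarrow> es!l = MStep p)"

definition Ginv :: "nat \<Rightarrow> nat \<Rightarrow> bool" where
  "Ginv p t \<longleftrightarrow>
   (phase (ps p t) = IncStart \<longrightarrow> (\<exists>i<t. es!i = InvInc p \<and> noMS p i t)) \<and>
   (phase (ps p t) = IncInMW \<longrightarrow> (\<exists>j<t. es!j = MWInv p (nextVal (ps p t)) \<and> noMS p j t)) \<and>
   (phase (ps p t) = ReadInMR \<longrightarrow> (\<exists>j<t. es!j = MRInv p \<and> noMS p j t)) \<and>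
   (phase (ps p t) \<noteq> IncInMW \<and> nextVal (ps p t) \<ge> 1 \<longrightarrow>
      (\<exists>j l0. j < l0 \<and> l0 < t \<and> es!j = MWInv p (nextVal (ps p t) - 1) \<and> es!l0 = MWResp p \<and> noMS p j l0))"

lemma G: "t \<le> length es \<Longrightarrow> Ginv p t"
proof (induction t)
  case 0 then show ?case unfolding Ginv_def ps0 init_lstate_def by simp
next
  case (Suc t)
  then have t: "t < length es" by simp
  note IH = Suc.IH[OF less_imp_le[OF t], unfolded Ginv_def]
  show ?case
  proof (cases "eproc (es!t) = p")
    case False
    then have e: "ps p (Suc t) = ps p t" using nostep t by simp
    have ext: "\<And>a. noMS p a t \<Longrightarrow> noMS p a (Suc t)" using False by (auto simp: noMS_def less_Suc_eq)
    show ?thesis unfolding Ginv_def e using IH ext less_SucI by meson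
  next
    case True
    have st: "astep k (ps p t) (es!t) = Some (ps p (Suc t))" using t True by (rule pstep)
    have t0: "noMS p t (Suc t)" by (auto simp: noMS_def)
    have extM: "\<And>a. noMS p a t \<Longrightarrow> es!t = MStep p \<Longrightarrow> noMS p a (Suc t)" by (auto simp: noMS_def less_Suc_eq)
    show ?thesis
    proof (cases "es!t")
      case (InvInc q)
      with True have q: "q = p" by simp
      note h = A_InvInc[OF st[unfolded InvInc]]
      have "\<exists>i<Suc t. es!i = InvInc p \<and> noMS p i (Suc t)" using t0 InvInc q by blast
      then show ?thesis unfolding Ginv_def using IH h by (auto; blast intro: less_SucI)
    next
      case (InvRead q)
      note h = A_InvRead[OF st[unfolded InvRead]]
      show ?thesis unfolding Ginv_def using IH h by (auto; blast intro: less_SucI)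
    next
      case (MWInv q v)
      with True have q: "q = p" by simp
      note h = A_MWInv[OF st[unfolded MWInv]]
      have "\<exists>j<Suc t. es!j = MWInv p v \<and> noMS p j (Suc t)" using t0 MWInv q by blast
      then show ?thesis unfolding Ginv_def using h by auto
    next
      case (MWResp q)
      with True have q: "q = p" by simp
      note h = A_MWResp[OF st[unfolded MWResp]]
      obtain j where j: "j < t" "es!j = MWInv p (nextVal (ps p t))" "noMS p j t" using IH h by auto
      have "\<exists>j l0. j < l0 \<and> l0 < Suc t \<and> es!j = MWInv p (nextVal (ps p (Suc t)) - 1) \<and> es!l0 = MWResp p \<and> noMS p j l0"
        using j h MWResp q by (intro exI[of _ j] exI[of _ t]) auto
      then show ?thesis unfolding Ginv_def using h by auto
    next
      case (MRInv q)
      with True have q: "q = p" by simp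
      note h = A_MRInv[OF st[unfolded MRInv]]
      have "\<exists>j<Suc t. es!j = MRInv p \<and> noMS p j (Suc t)" using t0 MRInv q by blast
      then show ?thesis unfolding Ginv_def using IH h by (auto; blast intro: less_SucI)
    next
      case (MRResp q r)
      note h = A_MRResp[OF st[unfolded MRResp]]
      show ?thesis unfolding Ginv_def using IH h by (auto; blast intro: less_SucI)
    next
      case (RespInc q)
      note h = A_RespInc[OF st[unfolded RespInc]]
      have hh: "phase (ps p t) \<noteq> IncInMW" "phase (ps p (Suc t)) = Idle" "nextVal (ps p (Suc t)) = nextVal (ps p t)"
        using h by auto
      show ?thesis unfolding Ginv_def using IH hh by (auto; blast intro: less_SucI)
    next
      case (RespRead q x)
      obtain r where h: "phase (ps p t) = ReadEnd r" "ps p (Suc t) = (ps p t)\<lparr>phase := Idle\<rparr>"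
        using A_RespRead[OF st[unfolded RespRead]] by blast
      show ?thesis unfolding Ginv_def using IH h by (auto; blast intro: less_SucI)
    next
      case (MStep q)
      with True have q: "q = p" by simp
      note h = A_MStep[OF st[unfolded MStep]]
      have e: "ps p (Suc t) = ps p t" using h by simp
      have ext: "\<And>a. noMS p a t \<Longrightarrow> noMS p a (Suc t)" using extM MStep q by simp
      show ?thesis unfolding Ginv_def e using IH ext less_SucI by meson
    qed
  qed
qed

end


lemma hproc_chist: "chist_ev e = Some x \<Longrightarrow> hproc x = eproc e" by (cases e) auto
lemma hproc_mhist: "mhist_ev e = Some x \<Longrightarrow> hproc x = eproc e" by (cases e) auto

lemma cinv_HInv: "chist_ev e \<noteq> None \<Longrightarrow> is_HInv (the (chist_ev e)) = is_cinv e"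
  by (cases e) (auto simp: is_cinv_def)

lemma filt_chist: "filter (\<lambda>e. hproc e = p) (List.map_filter chist_ev xs) =
   map (\<lambda>e. the (chist_ev e)) (filter (\<lambda>e. eproc e = p \<and> chist_ev e \<noteq> None) xs)"
proof (induction xs)
  case Nil then show ?case by (simp add: List.map_filter_simps)
next
  case (Cons x xs)
  then show ?case by (cases "chist_ev x") (auto simp: List.map_filter_simps hproc_chist)
qed

context exe begin

definition cpl :: "nat \<Rightarrow> nat \<Rightarrow> ev list" where
  "cpl p t = filter (\<lambda>e. eproc e = p \<and> chist_ev e \<noteq> None) (take t es)"

lemma W: "t \<le> length es \<Longrightarrow> (\<forall>i<length (cpl p t). even i \<longleftrightarrow> is_cinv (cpl p t ! i)) \<and>
   (even (length (cpl p t)) \<longleftrightarrow> phase (ps p t) = Idle)"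
proof (induction t)
  case 0 then show ?case unfolding cpl_def ps0 init_lstate_def by simp
next
  case (Suc t)
  then have t: "t < length es" by simp
  note IH = Suc.IH[OF less_imp_le[OF t]]
  have cs: "cpl p (Suc t) = cpl p t @ (if eproc (es!t) = p \<and> chist_ev (es!t) \<noteq> None then [es!t] else [])"
    unfolding cpl_def using t by (simp add: take_Suc_conv_app_nth)
  show ?case
  proof (cases "eproc (es!t) = p")
    case False
    then show ?thesis using cs IH nostep[OF t False] by simp
  next
    case True
    have st: "astep k (ps p t) (es!t) = Some (ps p (Suc t))" using t True by (rule pstep)
    have app: "\<And>e. (\<forall>i<length (cpl p t @ [e]). even i \<longleftrightarrow> is_cinv ((cpl p t @ [e]) ! i)) =
         ((\<forall>i<length (cpl p t). even i \<longleftrightarrow> is_cinv (cpl p t ! i)) \<and> (even (length (cpl p t)) \<longleftrightarrow> is_cinv e))"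
      by (auto simp: nth_append less_Suc_eq)
    show ?thesis
    proof (cases "es!t")
      case (InvInc q)
      note h = A_InvInc[OF st[unfolded InvInc]]
      show ?thesis using cs IH h InvInc True app by (simp add: is_cinv_def)
    next
      case (InvRead q)
      note h = A_InvRead[OF st[unfolded InvRead]]
      show ?thesis using cs IH h InvRead True app by (simp add: is_cinv_def)
    next
      case (MWInv q v)
      note h = A_MWInv[OF st[unfolded MWInv]]
      show ?thesis using cs IH h MWInv True by simp
    next
      case (MWResp q)
      note h = A_MWResp[OF st[unfolded MWResp]]
      show ?thesis using cs IH h MWResp True by simp
    next
      case (MRInv q)
      note h = A_MRInv[OF st[unfolded MRInv]]
      show ?thesis using cs IH h MRInv True by simp
    next
      case (MRResp q r)
      note h = A_MRResp[OF st[unfolded MRResp]]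
      show ?thesis using cs IH h MRResp True by simp
    next
      case (MStep q)
      note h = A_MStep[OF st[unfolded MStep]]
      show ?thesis using cs IH h MStep True by auto
    next
      case (RespInc q)
      note h = A_RespInc[OF st[unfolded RespInc]]
      have "phase (ps p t) \<noteq> Idle" "phase (ps p (Suc t)) = Idle" using h by auto
      then show ?thesis using cs IH RespInc True app by (simp add: is_cinv_def)
    next
      case (RespRead q x)
      obtain r where h: "phase (ps p t) = ReadEnd r" "ps p (Suc t) = (ps p t)\<lparr>phase := Idle\<rparr>"
        using A_RespRead[OF st[unfolded RespRead]] by blast
      show ?thesis using cs IH h RespRead True app by (simp add: is_cinv_def)
    qed
  qed
qed

lemma wf_chist: "well_formed (chist es)"
  unfolding well_formed_def chist_def Let_def filt_chist
proof (intro allI impI)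
  fix p i
  assume i: "i < length (map (\<lambda>e. the (chist_ev e)) (filter (\<lambda>e. eproc e = p \<and> chist_ev e \<noteq> None) es))"
  have c: "cpl p (length es) = filter (\<lambda>e. eproc e = p \<and> chist_ev e \<noteq> None) es" unfolding cpl_def by simp
  note w = W[of "length es" p, unfolded c]
  have "filter (\<lambda>e. eproc e = p \<and> chist_ev e \<noteq> None) es ! i \<in> set (filter (\<lambda>e. eproc e = p \<and> chist_ev e \<noteq> None) es)"
    using i by (intro nth_mem) simp
  then have "chist_ev (filter (\<lambda>e. eproc e = p \<and> chist_ev e \<noteq> None) es ! i) \<noteq> None" by simp
  then show "even i = is_HInv (map (\<lambda>e. the (chist_ev e)) (filter (\<lambda>e. eproc e = p \<and> chist_ev e \<noteq> None) es) ! i)"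
    using w i cinv_HInv by simp
qed

end


context exe begin

abbreviation "mh \<equiv> mhist es"
abbreviation "ch \<equiv> chist es"
abbreviation "mP \<equiv> posl mhist_ev es"
abbreviation "cP \<equiv> posl chist_ev es"
abbreviation "midx \<equiv> idx mhist_ev es"
abbreviation "cidx \<equiv> idx chist_ev es"

lemma mh_eq: "mh = map (\<lambda>t. the (mhist_ev (es!t))) mP" unfolding mhist_def by (rule mf_eq)
lemma ch_eq: "ch = map (\<lambda>t. the (chist_ev (es!t))) cP" unfolding chist_def by (rule mf_eq)

lemma resp_m: "j < length es \<Longrightarrow> mhist_ev (es!j) \<noteq> None \<Longrightarrow> l < length es \<Longrightarrow> mhist_ev (es!l) \<noteq> None \<Longrightarrow>
  resp_at mh (midx j) (midx l) \<longleftrightarrow>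
     j < l \<and> is_HInv (the (mhist_ev (es!j))) \<and> \<not> is_HInv (the (mhist_ev (es!l))) \<and> eproc (es!l) = eproc (es!j) \<and>
     (\<forall>x. j < x \<and> x < l \<and> mhist_ev (es!x) \<noteq> None \<longrightarrow> eproc (es!x) \<noteq> eproc (es!j))"
  unfolding mhist_def by (rule resp_at_pos) (auto intro: hproc_mhist)

lemma resp_c: "j < length es \<Longrightarrow> chist_ev (es!j) \<noteq> None \<Longrightarrow> l < length es \<Longrightarrow> chist_ev (es!l) \<noteq> None \<Longrightarrow>
  resp_at ch (cidx j) (cidx l) \<longleftrightarrow>
     j < l \<and> is_HInv (the (chist_ev (es!j))) \<and> \<not> is_HInv (the (chist_ev (es!l))) \<and> eproc (es!l) = eproc (es!j) \<and>
     (\<forall>x. j < x \<and> x < l \<and> chist_ev (es!x) \<noteq> None \<longrightarrow> eproc (es!x) \<noteq> eproc (es!j))"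
  unfolding chist_def by (rule resp_at_pos) (auto intro: hproc_chist)

definition hasC :: "nat \<Rightarrow> nat \<Rightarrow> bool" where
  "hasC p t \<longleftrightarrow> (\<exists>x. t < x \<and> x < length es \<and> eproc (es!x) = p \<and> chist_ev (es!x) \<noteq> None)"
definition fc :: "nat \<Rightarrow> nat \<Rightarrow> nat" where
  "fc p t = (LEAST x. t < x \<and> x < length es \<and> eproc (es!x) = p \<and> chist_ev (es!x) \<noteq> None)"

lemma fc: assumes "hasC p t"
  shows "t < fc p t" "fc p t < length es" "eproc (es!fc p t) = p" "chist_ev (es!fc p t) \<noteq> None"
    "\<And>x. t < x \<Longrightarrow> x < fc p t \<Longrightarrow> eproc (es!x) = p \<Longrightarrow> chist_ev (es!x) = None"
proof -
  let ?P = "\<lambda>x. t < x \<and> x < length es \<and> eproc (es!x) = p \<and> chist_ev (es!x) \<noteq> None"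
  have "?P (fc p t)" using assms unfolding hasC_def fc_def by (rule LeastI_ex)
  then show "t < fc p t" "fc p t < length es" "eproc (es!fc p t) = p" "chist_ev (es!fc p t) \<noteq> None" by auto
  fix x assume x: "t < x" "x < fc p t" "eproc (es!x) = p"
  have "\<not> ?P x" using x(2) unfolding fc_def by (rule not_less_Least)
  then show "chist_ev (es!x) = None" using x \<open>?P (fc p t)\<close> by auto
qed

lemma fc_le: "t < x \<Longrightarrow> x < length es \<Longrightarrow> eproc (es!x) = p \<Longrightarrow> chist_ev (es!x) \<noteq> None \<Longrightarrow> hasC p t \<and> fc p t \<le> x"
  unfolding hasC_def fc_def by (auto intro: Least_le)

lemma nonMS_of_c: "chist_ev e \<noteq> None \<Longrightarrow> e \<noteq> MStep p" by auto

lemma m_resp_at: assumes "es!s = MWInv p v \<or> es!s = MRInv p" "s < length es" "hasN p s"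
  shows "resp_at mh (midx s) (midx (nxN p s)) \<and> ((es!s = MWInv p v \<longrightarrow> es!(nxN p s) = MWResp p) \<and>
     (es!s = MRInv p \<longrightarrow> (\<exists>r. es!(nxN p s) = MRResp p r)))"
proof -
  note N = nxN[OF assms(3)]
  have r: "(es!s = MWInv p v \<longrightarrow> es!(nxN p s) = MWResp p) \<and> (es!s = MRInv p \<longrightarrow> (\<exists>r. es!(nxN p s) = MRResp p r))"
    using C_MWInv[OF _ assms(2,3)] C_MRInv[OF _ assms(2,3)] by blast
  then have mm: "mhist_ev (es!nxN p s) \<noteq> None" "\<not> is_HInv (the (mhist_ev (es!nxN p s)))" using assms(1) by auto
  have ms: "mhist_ev (es!s) \<noteq> None" "is_HInv (the (mhist_ev (es!s)))" "eproc (es!s) = p" using assms(1) by auto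
  have "resp_at mh (midx s) (midx (nxN p s))"
    apply (subst resp_m[OF assms(2) ms(1) N(2) mm(1)])
    using N ms mm by (fastforce)
  then show ?thesis using r by blast
qed

lemma inc_chain: assumes "es!i = InvInc p" "i < length es" "hasC p i"
  shows "hasN p i \<and> es!(fc p i) = RespInc p \<and>
    ((es!(nxN p i) = RespInc p \<and> nxN p i = fc p i \<and> phase (ps p (nxN p i)) = IncStart) \<or>
     (\<exists>v. es!(nxN p i) = MWInv p v \<and> hasN p (nxN p i) \<and> es!(nxN p (nxN p i)) = MWResp p \<and> nxN p (nxN p i) < fc p i))"
proof -
  note F = fc[OF assms(3)]
  have hN: "hasN p i" "nxN p i \<le> fc p i" using nxN_le[of i "fc p i" p] F nonMS_of_c[OF F(4)] by auto
  note N = nxN[OF hN(1)]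
  from C_InvInc[OF assms(1,2) hN(1)] show ?thesis
  proof
    assume v: "\<exists>v. es!(nxN p i) = MWInv p v"
    then obtain v where v: "es!(nxN p i) = MWInv p v" by blast
    have "nxN p i \<noteq> fc p i" using v F(4) by auto
    then have lt: "nxN p i < fc p i" using hN(2) by simp
    have h2: "hasN p (nxN p i)" "nxN p (nxN p i) \<le> fc p i" using nxN_le[of "nxN p i" "fc p i" p] F lt nonMS_of_c[OF F(4)] by auto
    have mr: "es!(nxN p (nxN p i)) = MWResp p" using C_MWInv[OF v N(2) h2(1)] .
    have "nxN p (nxN p i) \<noteq> fc p i" using mr F(4) by auto
    then have lt2: "nxN p (nxN p i) < fc p i" using h2(2) by simp
    note N2 = nxN[OF h2(1)]
    have h3: "hasN p (nxN p (nxN p i))" "nxN p (nxN p (nxN p i)) \<le> fc p i"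
      using nxN_le[of "nxN p (nxN p i)" "fc p i" p] F lt2 nonMS_of_c[OF F(4)] by auto
    note N3 = nxN[OF h3(1)]
    have ri: "es!(nxN p (nxN p (nxN p i))) = RespInc p" using C_MWResp[OF mr N2(2) h3(1)] .
    have "nxN p (nxN p (nxN p i)) = fc p i"
    proof (rule ccontr)
      assume "nxN p (nxN p (nxN p i)) \<noteq> fc p i"
      then have "nxN p (nxN p (nxN p i)) < fc p i" using h3(2) by simp
      moreover have "i < nxN p (nxN p (nxN p i))" using N N2 N3 by linarith
      ultimately show False using F(5) N3(3) ri by fastforce
    qed
    then show ?thesis using hN v h2 mr lt2 ri by auto
  next
    assume r: "es!(nxN p i) = RespInc p \<and> phase (ps p (nxN p i)) = IncStart"
    have "nxN p i = fc p i"
    proof (rule ccontr)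
      assume "nxN p i \<noteq> fc p i"
      then have "nxN p i < fc p i" using hN(2) by simp
      then show False using F(5) N r by fastforce
    qed
    then show ?thesis using hN r by auto
  qed
qed

lemma read_chain: assumes "es!i = InvRead p" "i < length es" "hasC p i"
  shows "\<exists>r. hasN p i \<and> es!(nxN p i) = MRInv p \<and> hasN p (nxN p i) \<and> es!(nxN p (nxN p i)) = MRResp p r \<and>
     nxN p (nxN p i) < fc p i \<and> es!(fc p i) = RespRead p (if r \<ge> 0 then k * 2 ^ nat r else 0)"
proof -
  note F = fc[OF assms(3)]
  have hN: "hasN p i" "nxN p i \<le> fc p i" using nxN_le[of i "fc p i" p] F nonMS_of_c[OF F(4)] by auto
  note N = nxN[OF hN(1)]
  have v: "es!(nxN p i) = MRInv p" using C_InvRead[OF assms(1,2) hN(1)] .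
  have "nxN p i \<noteq> fc p i" using v F(4) by auto
  then have lt: "nxN p i < fc p i" using hN(2) by simp
  have h2: "hasN p (nxN p i)" "nxN p (nxN p i) \<le> fc p i" using nxN_le[of "nxN p i" "fc p i" p] F lt nonMS_of_c[OF F(4)] by auto
  obtain r where mr: "es!(nxN p (nxN p i)) = MRResp p r" using C_MRInv[OF v N(2) h2(1)] by blast
  have "nxN p (nxN p i) \<noteq> fc p i" using mr F(4) by auto
  then have lt2: "nxN p (nxN p i) < fc p i" using h2(2) by simp
  note N2 = nxN[OF h2(1)]
  have h3: "hasN p (nxN p (nxN p i))" "nxN p (nxN p (nxN p i)) \<le> fc p i"
    using nxN_le[of "nxN p (nxN p i)" "fc p i" p] F lt2 nonMS_of_c[OF F(4)] by auto
  note N3 = nxN[OF h3(1)]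
  have ri: "es!(nxN p (nxN p (nxN p i))) = RespRead p (if r \<ge> 0 then k * 2 ^ nat r else 0)"
    using C_MRResp[OF mr N2(2) h3(1)] .
  have "nxN p (nxN p (nxN p i)) = fc p i"
  proof (rule ccontr)
    assume "nxN p (nxN p (nxN p i)) \<noteq> fc p i"
    then have "nxN p (nxN p (nxN p i)) < fc p i" using h3(2) by simp
    moreover have "i < nxN p (nxN p (nxN p i))" using N N2 N3 by linarith
    ultimately show False using F(5) N3(3) ri by fastforce
  qed
  then show ?thesis using hN v h2 mr lt2 ri by auto
qed

end


fun resv :: "('a, 'r) hev \<Rightarrow> 'r" where "resv (HRes _ x) = x"

lemma HRes_eq: "\<not> is_HInv h \<Longrightarrow> h = HRes (hproc h) (resv h)" by (cases h) auto

locale lin = exe n k es for n k es +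
  fixes LM :: "nat list" and retM :: "nat \<Rightarrow> mres"
  assumes n1: "n \<ge> 1" and kb: "k \<ge> sqrt (2 * real n)"
    and dL: "distinct LM"
    and invL: "\<forall>i\<in>set LM. op_inv (mhist es) i"
    and cmpl: "\<forall>i j. resp_at (mhist es) i j \<longrightarrow> i \<in> set LM \<and> mhist es ! j = HRes (hproc (mhist es ! i)) (retM i)"
    and rt: "\<forall>a b. a < length LM \<longrightarrow> b < length LM \<longrightarrow> (\<exists>j. resp_at (mhist es) (LM!b) j \<and> j < LM!a) \<longrightarrow> b < a"
    and lg: "maxreg_legal (map (\<lambda>i. (inv_arg (mhist es ! i), retM i)) LM)"
begin

abbreviation "sM \<equiv> map (\<lambda>i. (inv_arg (mhist es ! i), retM i)) LM"

lemma mh_len: "length mh = length mP" by (simp add: mh_eq)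
lemma mh_nth: "x < length mP \<Longrightarrow> mh ! x = the (mhist_ev (es!(mP!x)))" by (simp add: mh_eq)
lemma ch_len: "length ch = length cP" by (simp add: ch_eq)
lemma ch_nth: "x < length cP \<Longrightarrow> ch ! x = the (chist_ev (es!(cP!x)))" by (simp add: ch_eq)

lemma LM_el: "x \<in> set LM \<Longrightarrow> x < length mP \<and> is_HInv (mh!x)"
  using invL mh_len unfolding op_inv_def by auto

definition tau :: "nat \<Rightarrow> nat" where "tau a = Max ((\<lambda>a'. mP ! (LM ! a')) ` {..a})"

lemma tau_ge: "a' \<le> a \<Longrightarrow> mP!(LM!a') \<le> tau a"
  unfolding tau_def by (rule Max_ge) auto

lemma tau_att: "\<exists>a0\<le>a. tau a = mP!(LM!a0)"
proof -
  have "tau a \<in> (\<lambda>a'. mP ! (LM ! a')) ` {..a}" unfolding tau_def by (rule Max_in) auto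
  then show ?thesis by auto
qed

lemma tau_mono: "a \<le> a' \<Longrightarrow> tau a \<le> tau a'"
  using tau_att[of a] tau_ge[of _ a'] by (metis order_trans)

lemma tau_lt_resp: assumes "a < length LM" "resp_at mh (LM!a) y" shows "tau a < mP!y"
proof -
  obtain a0 where a0: "a0 \<le> a" "tau a = mP!(LM!a0)" using tau_att by blast
  have a0l: "a0 < length LM" using a0 assms by simp
  then have x: "LM!a0 < length mP" "is_HInv (mh!(LM!a0))" using LM_el by auto
  have y: "y < length mP" "\<not> is_HInv (mh!y)" using assms(2) mh_len unfolding resp_at_def by auto
  have ne: "LM!a0 \<noteq> y" using x y by auto
  have "\<not> y < LM!a0"
  proof
    assume "y < LM!a0"
    then have "a < a0" using rt a0l assms by blast
    then show False using a0 by simp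
  qed
  then have "LM!a0 < y" using ne by simp
  then show ?thesis using a0 posl_mono[of "LM!a0" y] y by simp
qed

definition posL :: "nat \<Rightarrow> nat" where "posL x = (THE a. a < length LM \<and> LM!a = x)"

lemma posL: "x \<in> set LM \<Longrightarrow> posL x < length LM \<and> LM!(posL x) = x"
  unfolding posL_def by (rule theI') (rule distinct_Ex1[OF dL])

lemma posL_nth: "a < length LM \<Longrightarrow> posL (LM!a) = a"
  unfolding posL_def by (rule the_equality) (auto simp: dL nth_eq_iff_index_eq)

lemma fin_wr: "finite (mr_writes s)"
proof -
  have "mr_writes s \<subseteq> (\<lambda>x. case fst x of MW v \<Rightarrow> v | MR \<Rightarrow> 0) ` set s"
  proof
    fix v assume "v \<in> mr_writes s"
    then obtain r where "(MW v, r) \<in> set s" unfolding mr_writes_def by blast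
    then show "v \<in> (\<lambda>x. case fst x of MW v \<Rightarrow> v | MR \<Rightarrow> 0) ` set s"
      by (rule rev_image_eqI) simp
  qed
  then show ?thesis by (rule finite_subset) simp
qed

lemma wr: "mr_writes (take a sM) = {v. \<exists>a'<a. a' < length LM \<and> inv_arg (mh!(LM!a')) = MW v}"
proof (intro set_eqI iffI)
  fix v assume "v \<in> mr_writes (take a sM)"
  then obtain r where "(MW v, r) \<in> set (take a sM)" by (auto simp: mr_writes_def)
  then obtain a' where a': "a' < length (take a sM)" "take a sM ! a' = (MW v, r)" by (auto simp: in_set_conv_nth)
  then have "a' < a" "a' < length LM" by auto
  moreover have "inv_arg (mh!(LM!a')) = MW v" using a' calculation by simp
  ultimately show "v \<in> {v. \<exists>a'<a. a' < length LM \<and> inv_arg (mh!(LM!a')) = MW v}" by blast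
next
  fix v assume "v \<in> {v. \<exists>a'<a. a' < length LM \<and> inv_arg (mh!(LM!a')) = MW v}"
  then obtain a' where a': "a' < a" "a' < length LM" "inv_arg (mh!(LM!a')) = MW v" by blast
  then have "take a sM ! a' = (MW v, retM (LM!a'))" by simp
  moreover have "a' < length (take a sM)" using a' by simp
  ultimately have "(MW v, retM (LM!a')) \<in> set (take a sM)" by (metis nth_mem)
  then show "v \<in> mr_writes (take a sM)" by (auto simp: mr_writes_def)
qed

lemma lg_a: "a < length LM \<Longrightarrow>
   retM (LM!a) = (case inv_arg (mh!(LM!a)) of MW v \<Rightarrow> MAck | MR \<Rightarrow> MVal (mr_value (take a sM)))"
  using lg unfolding maxreg_legal_def by auto

lemma wr_le: assumes "a' < a" "a' < length LM" "inv_arg (mh!(LM!a')) = MW v"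
  shows "mr_value (take a sM) \<ge> v"
proof -
  have "v \<in> mr_writes (take a sM)" unfolding wr using assms by blast
  then show ?thesis unfolding mr_value_def using fin_wr by auto
qed

end


context lin begin

definition ip :: "nat \<Rightarrow> nat" where "ip c = cP ! c"
definition pc :: "nat \<Rightarrow> nat" where "pc c = eproc (es!(ip c))"
definition hasSub :: "nat \<Rightarrow> bool" where
  "hasSub c \<longleftrightarrow> hasN (pc c) (ip c) \<and> is_minv (es!(nxN (pc c) (ip c))) \<and> midx (nxN (pc c) (ip c)) \<in> set LM"
definition sa :: "nat \<Rightarrow> nat" where "sa c = posL (midx (nxN (pc c) (ip c)))"
definition key :: "nat \<Rightarrow> nat \<times> nat" where
  "key c = (if hasSub c then (tau (sa c), sa c) else (ip c, 0))"
definition isinc :: "nat \<Rightarrow> bool" where "isinc c \<longleftrightarrow> (\<exists>p. es!(ip c) = InvInc p)"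
definition compl :: "nat \<Rightarrow> bool" where "compl c \<longleftrightarrow> (\<exists>d. resp_at ch c d)"
definition CR :: "nat set" where
  "CR = {c. c < length ch \<and> is_HInv (ch!c) \<and> (compl c \<or> (isinc c \<and> hasSub c))}"

lemma cinv: assumes "c < length ch" "is_HInv (ch!c)"
  shows "ip c < length es \<and> chist_ev (es!(ip c)) \<noteq> None \<and> (es!(ip c) = InvInc (pc c) \<or> es!(ip c) = InvRead (pc c))"
proof -
  have c: "c < length cP" using assms ch_len by simp
  note pn = posl_nth[OF c]
  have "is_HInv (the (chist_ev (es!(ip c))))" using assms ch_nth c unfolding ip_def by simp
  then show ?thesis using pn unfolding ip_def pc_def by (cases "es!(cP!c)") auto
qed

lemma ip_cidx: "t < length es \<Longrightarrow> chist_ev (es!t) \<noteq> None \<Longrightarrow> ip (cidx t) = t \<and> cidx t < length ch"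
  using idx_posl[of t es chist_ev] ch_len unfolding ip_def by simp

lemma cidx_ip: "c < length ch \<Longrightarrow> cidx (ip c) = c"
  using posl_idx[of c chist_ev es] ch_len unfolding ip_def by simp

lemma ip_inj: "c < length ch \<Longrightarrow> c' < length ch \<Longrightarrow> ip c = ip c' \<Longrightarrow> c = c'"
  by (metis cidx_ip)

lemma ip_mono: "c < c' \<Longrightarrow> c' < length ch \<Longrightarrow> ip c < ip c'"
  using posl_mono[of c c' chist_ev es] ch_len unfolding ip_def by simp

lemma sub_facts: assumes "hasSub c"
  shows "nxN (pc c) (ip c) < length es \<and> ip c < nxN (pc c) (ip c) \<and> sa c < length LM \<and>
     LM!(sa c) = midx (nxN (pc c) (ip c)) \<and> mP!(LM!(sa c)) = nxN (pc c) (ip c) \<and>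
     mP ! midx (nxN (pc c) (ip c)) = nxN (pc c) (ip c) \<and>
     eproc (es!nxN (pc c) (ip c)) = pc c \<and> mhist_ev (es!nxN (pc c) (ip c)) \<noteq> None"
proof -
  let ?s = "nxN (pc c) (ip c)"
  have h: "hasN (pc c) (ip c)" "is_minv (es!?s)" "midx ?s \<in> set LM" using assms unfolding hasSub_def by auto
  note N = nxN[OF h(1)]
  have mm: "mhist_ev (es!?s) \<noteq> None" using h(2) unfolding is_minv_def by auto
  note P = posL[OF h(3)]
  show ?thesis using N mm P idx_posl[of ?s es mhist_ev] unfolding sa_def by simp
qed

lemma key_fst_ge: assumes "c < length ch" "is_HInv (ch!c)" shows "ip c \<le> fst (key c)"
proof (cases "hasSub c")
  case True
  note S = sub_facts[OF True]
  have "mP!(LM!(sa c)) \<le> tau (sa c)" by (rule tau_ge) simp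
  then show ?thesis using S True unfolding key_def by simp
next
  case False then show ?thesis unfolding key_def by simp
qed

lemma key_fst_lt: assumes "resp_at ch B d" shows "fst (key B) < cP!d"
proof -
  have B: "B < length ch" "is_HInv (ch!B)" "B < d" "d < length ch" using assms unfolding resp_at_def op_inv_def by auto
  note cB = cinv[OF B(1,2)]
  have dP: "d < length cP" using B ch_len by simp
  note pd = posl_nth[OF dP]
  let ?u = "cP!d" and ?p = "pc B"
  have cu: "cidx ?u = d" using posl_idx[OF dP] .
  have cb: "cidx (ip B) = B" using cidx_ip B by simp
  have R: "ip B < ?u \<and> eproc (es!?u) = ?p \<and> (\<forall>x. ip B < x \<and> x < ?u \<and> chist_ev (es!x) \<noteq> None \<longrightarrow> eproc (es!x) \<noteq> ?p)"
    using resp_c[of "ip B" ?u] cB pd assms cu cb unfolding pc_def by auto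
  show ?thesis
  proof (cases "hasSub B")
    case False
    then show ?thesis using R unfolding key_def by simp
  next
    case True
    note S = sub_facts[OF True]
    let ?s = "nxN ?p (ip B)"
    have h: "hasN ?p (ip B)" "is_minv (es!?s)" using True unfolding hasSub_def by auto
    have uMS: "es!?u \<noteq> MStep ?p" using pd by auto
    have s_le: "?s \<le> ?u" using nxN_le[of "ip B" ?u ?p] R pd uMS by auto
    have "?s \<noteq> ?u" using h(2) pd unfolding is_minv_def by auto
    then have s_lt: "?s < ?u" using s_le by simp
    have h2: "hasN ?p ?s" "nxN ?p ?s \<le> ?u" using nxN_le[of ?s ?u ?p] R pd s_lt uMS by auto
    obtain v where e: "es!?s = MWInv ?p v \<or> es!?s = MRInv ?p"
      using h(2) S unfolding is_minv_def by auto
    have mr: "resp_at mh (midx ?s) (midx (nxN ?p ?s))" using m_resp_at[OF e _ h2(1)] S by blast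
    have "nxN ?p ?s \<noteq> ?u"
      using m_resp_at[OF e _ h2(1)] S pd e by auto
    then have l_lt: "nxN ?p ?s < ?u" using h2 by simp
    have "tau (sa B) < mP!(midx (nxN ?p ?s))" using tau_lt_resp[of "sa B"] S mr by simp
    moreover have "mP!(midx (nxN ?p ?s)) = nxN ?p ?s"
      using idx_posl[of "nxN ?p ?s" es mhist_ev] nxN[OF h2(1)] m_resp_at[OF e _ h2(1)] S e by auto
    ultimately show ?thesis using l_lt True unfolding key_def by simp
  qed
qed

lemma KR: assumes "resp_at ch B d" "A < length ch" "is_HInv (ch!A)" "d < A" shows "key B < key A"
proof -
  have "cP!d < cP!A" using posl_mono[of d A chist_ev es] assms ch_len by simp
  then have "fst (key B) < fst (key A)" using key_fst_lt[OF assms(1)] key_fst_ge[OF assms(2,3)] unfolding ip_def by simp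
  then show ?thesis by (simp add: less_prod_def)
qed

end


lemma mc_disj: "mhist_ev e \<noteq> None \<Longrightarrow> chist_ev e = None" by (cases e) auto

context lin begin

lemma key_inj: assumes "c1 < length ch" "is_HInv (ch!c1)" "c2 < length ch" "is_HInv (ch!c2)" "key c1 = key c2"
  shows "c1 = c2"
proof -
  note C1 = cinv[OF assms(1,2)] and C2 = cinv[OF assms(3,4)]
  have nt: "\<And>c1 c2. c1 < length ch \<Longrightarrow> is_HInv (ch!c1) \<Longrightarrow> c2 < length ch \<Longrightarrow> is_HInv (ch!c2) \<Longrightarrow>
      hasSub c1 \<Longrightarrow> \<not> hasSub c2 \<Longrightarrow> key c1 \<noteq> key c2"
  proof
    fix c1 c2 assume a: "c1 < length ch" "is_HInv (ch!c1)" "c2 < length ch" "is_HInv (ch!c2)" "hasSub c1" "\<not> hasSub c2"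
      "key c1 = key c2"
    have k1: "key c1 = (tau (sa c1), sa c1)" using a(5) unfolding key_def by simp
    have k2: "key c2 = (ip c2, 0)" using a(6) unfolding key_def by simp
    have eq: "tau (sa c1) = ip c2" using a(7) k1 k2 by (metis fst_conv)
    obtain a0 where a0: "a0 \<le> sa c1" "tau (sa c1) = mP!(LM!a0)" using tau_att by blast
    have "a0 < length LM" using a0 sub_facts[OF a(5)] by simp
    then have "LM!a0 < length mP" using LM_el by simp
    then have "mhist_ev (es!(mP!(LM!a0))) \<noteq> None" using posl_nth by blast
    moreover have "chist_ev (es!(ip c2)) \<noteq> None" using cinv[OF a(3,4)] by simp
    ultimately show False using eq a0 mc_disj by metis
  qed
  show ?thesis
  proof (cases "hasSub c1")
    case h1: True
    show ?thesis
    proof (cases "hasSub c2")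
      case h2: True
      note S1 = sub_facts[OF h1] and S2 = sub_facts[OF h2]
      have "sa c1 = sa c2" using assms(5) h1 h2 unfolding key_def by simp
      then have "midx (nxN (pc c1) (ip c1)) = midx (nxN (pc c2) (ip c2))" using S1 S2 by simp
      then have seq: "nxN (pc c1) (ip c1) = nxN (pc c2) (ip c2)"
        using idx_inj[of "nxN (pc c1) (ip c1)" es mhist_ev "nxN (pc c2) (ip c2)"] S1 S2 by simp
      then have peq: "pc c1 = pc c2" using S1 S2 by metis
      have hn1: "hasN (pc c1) (ip c1)" and hn2: "hasN (pc c2) (ip c2)" using h1 h2 unfolding hasSub_def by auto
      have "ip c1 = ip c2"
      proof (rule ccontr)
        assume "ip c1 \<noteq> ip c2"
        then consider "ip c1 < ip c2" | "ip c2 < ip c1" by linarith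
        then show False
        proof cases
          case 1
          have "es!(ip c2) = MStep (pc c1)"
            using nxN(5)[OF hn1, of "ip c2"] 1 S2 seq peq unfolding pc_def by (metis pc_def)
          then show False using C2 by auto
        next
          case 2
          have "es!(ip c1) = MStep (pc c2)"
            using nxN(5)[OF hn2, of "ip c1"] 2 S1 seq peq unfolding pc_def by (metis pc_def)
          then show False using C1 by auto
        qed
      qed
      then show ?thesis using ip_inj assms by blast
    next
      case False
      then show ?thesis using nt[OF assms(1-4) h1 False] assms(5) by simp
    qed
  next
    case h1: False
    show ?thesis
    proof (cases "hasSub c2")
      case True
      then show ?thesis using nt[OF assms(3,4,1,2) True h1] assms(5) by simp
    next
      case False
      then have "ip c1 = ip c2" using h1 assms(5) unfolding key_def by simp
      then show ?thesis using ip_inj assms by blast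
    qed
  qed
qed

lemma CR_fin: "finite CR"
  by (rule finite_subset[of _ "{..<length ch}"]) (auto simp: CR_def)

definition LC :: "nat list" where "LC = sort_key key (sorted_list_of_set CR)"

lemma LC_set: "set LC = CR" unfolding LC_def using CR_fin by simp
lemma LC_dist: "distinct LC" unfolding LC_def using CR_fin by simp
lemma LC_sorted: "sorted (map key LC)" unfolding LC_def by simp

lemma LC_el: "c \<in> set LC \<Longrightarrow> c < length ch \<and> is_HInv (ch!c)" using LC_set unfolding CR_def by auto

lemma LC_strict: assumes "a < b" "b < length LC" shows "key (LC!a) < key (LC!b)"
proof -
  have le: "key (LC!a) \<le> key (LC!b)"
    using LC_sorted assms sorted_iff_nth_mono[of "map key LC"] by auto
  have ne: "LC!a \<noteq> LC!b" using LC_dist assms by (simp add: nth_eq_iff_index_eq)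
  have "LC!a \<in> set LC" "LC!b \<in> set LC" using assms by auto
  then have "key (LC!a) \<noteq> key (LC!b)" using key_inj LC_el ne by blast
  then show ?thesis using le by simp
qed

lemma LC_ord: assumes "a < length LC" "b < length LC" "key (LC!b) < key (LC!a)" shows "b < a"
proof (rule ccontr)
  assume "\<not> b < a"
  then consider "a = b" | "a < b" by linarith
  then show False
  proof cases
    case 1 then show False using assms by simp
  next
    case 2 then show False using LC_strict[OF 2 assms(2)] assms(3) by simp
  qed
qed

definition retC :: "nat \<Rightarrow> cres" where
  "retC c = (if compl c then resv (ch ! (SOME d. resp_at ch c d)) else CAck)"

lemma part_resp: "resp_at ch i j \<Longrightarrow> i \<in> set LC \<and> ch!j = HRes (hproc (ch!i)) (retC i)"
proof -
  assume r: "resp_at ch i j"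
  then have "compl i" unfolding compl_def by blast
  moreover have "i < length ch" "is_HInv (ch!i)" using r unfolding resp_at_def op_inv_def by auto
  ultimately have "i \<in> set LC" unfolding LC_set CR_def by auto
  moreover have "(SOME d. resp_at ch i d) = j" using r resp_at_unique by (metis someI)
  then have "retC i = resv (ch!j)" using \<open>compl i\<close> unfolding retC_def by simp
  moreover have "ch!j = HRes (hproc (ch!j)) (resv (ch!j))" using r HRes_eq unfolding resp_at_def by blast
  moreover have "hproc (ch!j) = hproc (ch!i)" using r unfolding resp_at_def by simp
  ultimately show ?thesis by simp
qed

lemma part_rt: assumes "a < length LC" "b < length LC" "resp_at ch (LC!b) j" "j < LC!a" shows "b < a"
proof -
  have "LC!a \<in> set LC" using assms by simp
  then have "key (LC!b) < key (LC!a)" using KR[OF assms(3) _ _ assms(4)] LC_el by blast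
  then show ?thesis using LC_ord assms by blast
qed

end


lemma mh_MW: "mhist_ev e \<noteq> None \<Longrightarrow> inv_arg (the (mhist_ev e)) = MW v \<Longrightarrow> is_HInv (the (mhist_ev e)) \<Longrightarrow>
   e = MWInv (eproc e) v"
  by (cases e) auto

context exe begin

lemma cnt_const: "t \<le> t' \<Longrightarrow> t' \<le> length es \<Longrightarrow> (\<forall>x. t \<le> x \<and> x < t' \<longrightarrow> es!x \<noteq> InvInc q) \<Longrightarrow> cnt es q t' = cnt es q t"
proof (induction t' rule: dec_induct)
  case base then show ?case by simp
next
  case (step m) then show ?case using cnt_Suc[of m es q] by auto
qed

lemma cnt_card: "t \<le> length es \<Longrightarrow> cnt es q t = card {x. x < t \<and> es!x = InvInc q}"
  unfolding cnt_def length_filter_conv_card by (rule arg_cong[where f=card]) auto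

end

context lin begin

lemma resp_fc: assumes "resp_at ch c d"
  shows "hasC (pc c) (ip c) \<and> fc (pc c) (ip c) = cP!d \<and> c < length ch \<and> is_HInv (ch!c)"
proof -
  have B: "c < length ch" "is_HInv (ch!c)" "c < d" "d < length ch" using assms unfolding resp_at_def op_inv_def by auto
  note cB = cinv[OF B(1,2)]
  have dP: "d < length cP" using B ch_len by simp
  note pd = posl_nth[OF dP]
  let ?u = "cP!d" and ?p = "pc c"
  have cu: "cidx ?u = d" using posl_idx[OF dP] .
  have cb: "cidx (ip c) = c" using cidx_ip B by simp
  have R: "ip c < ?u \<and> eproc (es!?u) = ?p \<and> (\<forall>x. ip c < x \<and> x < ?u \<and> chist_ev (es!x) \<noteq> None \<longrightarrow> eproc (es!x) \<noteq> ?p)"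
    using resp_c[of "ip c" ?u] cB pd assms cu cb unfolding pc_def by auto
  have h: "hasC ?p (ip c)" "fc ?p (ip c) \<le> ?u" using fc_le[of "ip c" ?u ?p] R pd by auto
  note F = fc[OF h(1)]
  have "fc ?p (ip c) = ?u"
  proof (rule ccontr)
    assume "fc ?p (ip c) \<noteq> ?u"
    then have "fc ?p (ip c) < ?u" using h by simp
    then show False using R F by blast
  qed
  then show ?thesis using h B by simp
qed

lemma pc_lt: "c < length ch \<Longrightarrow> is_HInv (ch!c) \<Longrightarrow> pc c < n"
  using cinv procs unfolding pc_def by auto

lemma mh_at: "x < length mP \<Longrightarrow> mh!x = the (mhist_ev (es!(mP!x))) \<and> mP!x < length es \<and> mhist_ev (es!(mP!x)) \<noteq> None"
  using mh_nth posl_nth by blast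

lemma UB: assumes a: "a < length LM" and rr: "r = mr_value (take a sM)" "r \<ge> 0"
  shows "2 ^ nat r \<le> card {c\<in>CR. isinc c \<and> key c < (tau a, a)}"
proof -
  let ?S = "{c\<in>CR. isinc c \<and> key c < (tau a, a)}"
  have ne: "mr_writes (take a sM) \<noteq> {}" using rr unfolding mr_value_def by auto
  then have "r \<in> mr_writes (take a sM)" using rr fin_wr unfolding mr_value_def by (simp add: Max_in)
  then obtain a' where a': "a' < a" "a' < length LM" "inv_arg (mh!(LM!a')) = MW r" unfolding wr by blast
  let ?x = "LM!a'"
  have x: "?x < length mP" "is_HInv (mh!?x)" using LM_el a' by auto
  note M = mh_at[OF x(1)]
  let ?j = "mP!?x"
  define q where "q = eproc (es!?j)"
  have ej: "es!?j = MWInv q r" using mh_MW[of "es!?j" r] M x a' unfolding q_def by simp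
  have jl: "?j < length es" using M by simp
  have F1r: "cnt es q ?j = 2 ^ nat r" using F1[OF ej jl] by simp
  have st0: "astep k (ps q ?j) (es!?j) = Some (ps q (Suc ?j))" using jl q_def by (intro pstep) auto
  have phs: "phase (ps q ?j) = IncStart" using A_MWInv[OF st0[unfolded ej]] by simp
  obtain i' where i': "i' < ?j" "es!i' = InvInc q" "noMS q i' ?j" using G[of ?j q] jl phs unfolding Ginv_def by auto
  have hN: "hasN q i'" "nxN q i' \<le> ?j" using nxN_le[of i' ?j q] i' jl ej by auto
  have nx: "nxN q i' = ?j"
  proof (rule ccontr)
    assume "nxN q i' \<noteq> ?j"
    then have "nxN q i' < ?j" using hN by simp
    then show False using nxN[OF hN(1)] i'(3) unfolding noMS_def by blast
  qed
  have il: "i' < length es" using i' jl by simp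
  have ci: "ip (cidx i') = i'" "cidx i' < length ch" using ip_cidx[of i'] il i' by auto
  let ?c = "cidx i'"
  have pcc: "pc ?c = q" using ci i' unfolding pc_def by simp
  have mj: "midx ?j = ?x" using posl_idx[OF x(1)] .
  have hs: "hasSub ?c" unfolding hasSub_def pcc ci(1) nx mj using hN ej a' by (auto simp: is_minv_def)
  have sac: "sa ?c = a'" unfolding sa_def pcc ci(1) nx mj using posL_nth a' by simp
  have kc: "key ?c = (tau a', a')" using hs sac unfolding key_def by simp
  have kc2: "key ?c < (tau a, a)" unfolding kc using tau_mono[of a' a] a' by simp
  have hi: "\<And>t. t < length es \<Longrightarrow> es!t = InvInc q \<Longrightarrow> is_HInv (ch!cidx t) \<and> cidx t < length ch \<and> ip (cidx t) = t"
    using ip_cidx ch_nth ch_len unfolding ip_def by (metis chist_ev.simps(1) is_HInv.simps(1) option.sel option.simps(3))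
  have cR: "?c \<in> ?S" using hs ci i' hi[OF il i'(2)] kc2 unfolding CR_def isinc_def by auto
  let ?T = "{t. t < ?j \<and> es!t = InvInc q}"
  have cardT: "card ?T = 2 ^ nat r" using cnt_card[of ?j q] jl F1r by simp
  have inj: "inj_on cidx ?T"
  proof (rule inj_onI)
    fix x y assume xy: "x \<in> ?T" "y \<in> ?T" "cidx x = cidx y"
    then have "x < length es" "y < length es" "chist_ev (es!x) \<noteq> None" "chist_ev (es!y) \<noteq> None" using jl by auto
    then show "x = y" using idx_inj[of x es chist_ev y] xy(3) by simp
  qed
  have img: "cidx ` ?T \<subseteq> ?S"
  proof
    fix c assume "c \<in> cidx ` ?T"
    then obtain t where t: "t < ?j" "es!t = InvInc q" "c = cidx t" by blast
    have tl: "t < length es" using t jl by simp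
    have tle: "t \<le> i'"
    proof (rule ccontr)
      assume "\<not> t \<le> i'"
      then have "es!t = MStep q" using i'(3) t unfolding noMS_def by (metis eproc.simps(1) not_le)
      then show False using t by simp
    qed
    show "c \<in> ?S"
    proof (cases "t = i'")
      case True then show ?thesis using cR t by simp
    next
      case False
      then have tlt: "t < i'" using tle by simp
      have hc: "hasC q t" "fc q t \<le> i'" using fc_le[of t i' q] tlt il i' by auto
      note FC = fc[OF hc(1)]
      have "es!(fc q t) = RespInc q" using inc_chain[OF t(2) tl hc(1)] by simp
      then have "fc q t \<noteq> i'" using i'(2) by auto
      then have ult: "fc q t < i'" using hc(2) by simp
      have rsp: "resp_at ch (cidx t) (cidx (fc q t))"
        using resp_c[of t "fc q t"] tl FC t(2) \<open>es!(fc q t) = RespInc q\<close> by auto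
      have "cidx (fc q t) < ?c" using idx_mono[of "fc q t" es chist_ev i'] FC il i' ult by simp
      then have "key (cidx t) < key ?c" using KR[OF rsp ci(2)] hi[OF il i'(2)] by simp
      then have "key c < (tau a, a)" using kc2 t(3) by simp
      moreover have "c \<in> CR" using rsp hi[OF tl t(2)] t(3) unfolding CR_def compl_def by auto
      moreover have "isinc c" using hi[OF tl t(2)] t unfolding isinc_def by simp
      ultimately show ?thesis by simp
    qed
  qed
  have "finite ?S" using CR_fin by simp
  then have "card ?T \<le> card ?S" using card_inj_on_le[OF inj img] by simp
  then show ?thesis using cardT by simp
qed

end


context lin begin

lemma cnt_sub: assumes "hasN q i" "i < length es" shows "cnt es q (nxN q i) = cnt es q (Suc i)"
proof -
  note N = nxN[OF assms(1)]
  show ?thesis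
  proof (rule cnt_const)
    show "Suc i \<le> nxN q i" "nxN q i \<le> length es" using N by auto
    show "\<forall>x. Suc i \<le> x \<and> x < nxN q i \<longrightarrow> es!x \<noteq> InvInc q"
    proof (intro allI impI)
      fix x assume x: "Suc i \<le> x \<and> x < nxN q i"
      show "es!x \<noteq> InvInc q"
      proof
        assume e: "es!x = InvInc q"
        then have "es!x = MStep q" using N(5)[of x] x by simp
        then show False using e by simp
      qed
    qed
  qed
qed

lemma cstar_bound: assumes c: "c \<in> CR" "isinc c" and kc: "key c < (tau a, a)" and a: "a < length LM"
    and rr: "r = mr_value (take a sM)"
  shows "cnt es (pc c) (Suc (ip c)) \<le> 2 ^ (nat r + 1) \<and> r \<ge> 0"
proof -
  let ?q = "pc c" and ?i = "ip c"
  have cl: "c < length ch" "is_HInv (ch!c)" using c unfolding CR_def by auto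
  note C = cinv[OF cl]
  have ei: "es!?i = InvInc ?q" using C c(2) unfolding isinc_def by auto
  have il: "?i < length es" using C by simp
  show ?thesis
  proof (cases "hasSub c")
    case True
    note S = sub_facts[OF True]
    let ?s = "nxN ?q ?i"
    have hN: "hasN ?q ?i" "is_minv (es!?s)" using True unfolding hasSub_def by auto
    obtain v where ev: "es!?s = MWInv ?q v"
      using C_InvInc[OF ei il hN(1)] hN(2) unfolding is_minv_def by auto
    have kc': "key c = (tau (sa c), sa c)" using True unfolding key_def by simp
    have a'a: "sa c < a"
    proof (rule ccontr)
      assume "\<not> sa c < a"
      then have "tau a \<le> tau (sa c)" using tau_mono by simp
      then show False using kc kc' \<open>\<not> sa c < a\<close> by auto
    qed
    have ml: "midx ?s < length mP" using idx_posl[of ?s es mhist_ev] S by simp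
    have "mh!(LM!(sa c)) = HInv ?q (MW v)" using S mh_at[OF ml] ev by simp
    then have "inv_arg (mh!(LM!(sa c))) = MW v" by simp
    then have vr: "v \<le> r" using wr_le[OF a'a] S rr by simp
    have F: "v \<ge> 0" "cnt es ?q ?s = 2 ^ nat v" using F1[OF ev] S by auto
    have "cnt es ?q (Suc ?i) = 2 ^ nat v" using cnt_sub[OF hN(1) il] F by simp
    moreover have "(2::nat) ^ nat v \<le> 2 ^ (nat r + 1)" using vr F(1) by (intro power_increasing) auto
    ultimately show ?thesis using vr F(1) by simp
  next
    case False
    then have "compl c" using c unfolding CR_def by auto
    then obtain d where d: "resp_at ch c d" unfolding compl_def by blast
    note RF = resp_fc[OF d]
    note IC = inc_chain[OF ei il conjunct1[OF RF]]
    let ?s = "nxN ?q ?i"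
    have hN: "hasN ?q ?i" using IC by simp
    note N = nxN[OF hN]
    have rs: "es!?s = RespInc ?q \<and> phase (ps ?q ?s) = IncStart"
    proof -
      { fix v assume mw: "es!?s = MWInv ?q v" "hasN ?q ?s"
        have "resp_at mh (midx ?s) (midx (nxN ?q ?s))" using m_resp_at[of ?s ?q v] mw N by blast
        then have "midx ?s \<in> set LM" using cmpl by blast
        then have "hasSub c" unfolding hasSub_def using hN mw by (simp add: is_minv_def)
        then have False using False by simp }
      then show ?thesis using IC by blast
    qed
    have F: "nextVal (ps ?q ?s) \<ge> 1" "cnt es ?q ?s < 2 ^ nat (nextVal (ps ?q ?s))"
      using F2[of ?s ?q] rs N by auto
    have cq: "cnt es ?q (Suc ?i) = cnt es ?q ?s" using cnt_sub[OF hN il] by simp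
    have pse: "ps ?q (Suc ?i) = ps ?q ?s" using nxN_state[OF hN] by simp
    let ?nv = "nextVal (ps ?q ?s)"
    have "Ginv ?q (Suc ?i)" using G il by simp
    then obtain j0 l0 where jl: "j0 < l0" "l0 < Suc ?i" "es!j0 = MWInv ?q (?nv - 1)" "es!l0 = MWResp ?q" "noMS ?q j0 l0"
      unfolding Ginv_def pse using rs F(1) by auto
    have "l0 \<noteq> ?i" using jl ei by auto
    then have l0i: "l0 < ?i" using jl by simp
    have l0l: "l0 < length es" "j0 < length es" using l0i il jl by auto
    have rm: "resp_at mh (midx j0) (midx l0)"
    proof (subst resp_m)
      show "j0 < length es" "mhist_ev (es!j0) \<noteq> None" "l0 < length es" "mhist_ev (es!l0) \<noteq> None"
        using l0l jl by auto
      show "j0 < l0 \<and> is_HInv (the (mhist_ev (es!j0))) \<and> \<not> is_HInv (the (mhist_ev (es!l0))) \<and> eproc (es!l0) = eproc (es!j0) \<and>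
        (\<forall>x. j0 < x \<and> x < l0 \<and> mhist_ev (es!x) \<noteq> None \<longrightarrow> eproc (es!x) \<noteq> eproc (es!j0))"
        using jl unfolding noMS_def by fastforce
    qed
    then have inL: "midx j0 \<in> set LM" using cmpl by blast
    note PL = posL[OF inL]
    let ?a1 = "posL (midx j0)"
    have kc': "key c = (?i, 0)" using False unfolding key_def by simp
    have ile: "?i \<le> tau a" using kc kc' by auto
    obtain a0 where a0: "a0 \<le> a" "tau a = mP!(LM!a0)" using tau_att by blast
    have a0l: "a0 < length LM" using a0 a by simp
    then have x0: "LM!a0 < length mP" using LM_el by simp
    note P0 = posl_nth[OF x0]
    have "?i \<noteq> tau a" using a0 P0 C mc_disj by metis
    then have "?i < tau a" using ile by simp
    then have "l0 < mP!(LM!a0)" using l0i a0 by simp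
    then have "midx l0 < midx (mP!(LM!a0))" using idx_mono[of l0 es mhist_ev "mP!(LM!a0)"] l0l jl P0 by simp
    then have "midx l0 < LM!a0" using posl_idx[OF x0] by simp
    then have "?a1 < a0" using rt a0l PL rm by metis
    then have a1a: "?a1 < a" using a0 by simp
    have ml: "midx j0 < length mP" using idx_posl[of j0 es mhist_ev] l0l jl by simp
    have "mh!(LM!?a1) = HInv ?q (MW (?nv - 1))" using PL mh_at[OF ml] idx_posl[of j0 es mhist_ev] l0l jl by simp
    then have "inv_arg (mh!(LM!?a1)) = MW (?nv - 1)" by simp
    then have nvr: "?nv - 1 \<le> r" using wr_le[OF a1a] PL rr by simp
    have "nat ?nv \<le> nat r + 1" using nvr F(1) by linarith
    then have "(2::nat) ^ nat ?nv \<le> 2 ^ (nat r + 1)" by (intro power_increasing) auto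
    then show ?thesis using cq F nvr by simp
  qed
qed

end


context lin begin

lemma inc_ip: "c \<in> CR \<Longrightarrow> isinc c \<Longrightarrow> es!(ip c) = InvInc (pc c)"
  using cinv unfolding CR_def isinc_def by fastforce

lemma Sq: assumes a: "a < length LM" and rr: "r = mr_value (take a sM)"
  shows "card {c\<in>CR. isinc c \<and> key c < (tau a, a) \<and> pc c = q} \<le> 2 ^ (nat r + 1)"
proof (cases "{c\<in>CR. isinc c \<and> key c < (tau a, a) \<and> pc c = q} = {}")
  case True then show ?thesis by (simp only: card.empty)
next
  case False
  let ?Sq = "{c\<in>CR. isinc c \<and> key c < (tau a, a) \<and> pc c = q}"
  have fin: "finite ?Sq" using CR_fin by simp
  define cs where "cs = Max ?Sq"
  have cs: "cs \<in> ?Sq" unfolding cs_def using fin False by (rule Max_in)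
  have csm: "\<And>c. c \<in> ?Sq \<Longrightarrow> c \<le> cs" unfolding cs_def using fin by (rule Max_ge)
  have csl: "cs < length ch" using cs unfolding CR_def by auto
  have ipl: "ip cs < length es" using cinv cs unfolding CR_def by auto
  have inj: "inj_on ip ?Sq" using ip_inj unfolding CR_def by (intro inj_onI) auto
  have img: "ip ` ?Sq \<subseteq> {t. t < Suc (ip cs) \<and> es!t = InvInc q}"
  proof
    fix t assume "t \<in> ip ` ?Sq"
    then obtain c where c: "c \<in> ?Sq" "t = ip c" by blast
    have "c \<le> cs" using csm c by simp
    then have "ip c \<le> ip cs" using ip_mono[of c cs] csl by (cases "c = cs") auto
    moreover have "es!(ip c) = InvInc q" using inc_ip c by auto
    ultimately show "t \<in> {t. t < Suc (ip cs) \<and> es!t = InvInc q}" using c by simp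
  qed
  have "card ?Sq \<le> card {t. t < Suc (ip cs) \<and> es!t = InvInc q}"
    by (rule card_inj_on_le[OF inj img]) simp
  also have "\<dots> = cnt es q (Suc (ip cs))" using cnt_card[of "Suc (ip cs)" q] ipl by simp
  also have "\<dots> \<le> 2 ^ (nat r + 1)" using cstar_bound[of cs a r] cs a rr by auto
  finally show ?thesis .
qed

lemma LB: assumes a: "a < length LM" and rr: "r = mr_value (take a sM)"
  shows "card {c\<in>CR. isinc c \<and> key c < (tau a, a)} \<le> n * 2 ^ (nat r + 1)"
proof -
  let ?S = "{c\<in>CR. isinc c \<and> key c < (tau a, a)}"
  have eq: "?S = (\<Union>q\<in>{..<n}. {c\<in>CR. isinc c \<and> key c < (tau a, a) \<and> pc c = q})"
    using pc_lt unfolding CR_def by auto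
  have "card ?S \<le> (\<Sum>q\<in>{..<n}. card {c\<in>CR. isinc c \<and> key c < (tau a, a) \<and> pc c = q})"
    unfolding eq by (rule card_UN_le) simp
  also have "\<dots> \<le> card {..<n} * 2 ^ (nat r + 1)"
  proof -
    have "\<And>q. q \<in> {..<n} \<Longrightarrow> card {c\<in>CR. isinc c \<and> key c < (tau a, a) \<and> pc c = q} \<le> 2 ^ (nat r + 1)"
      using Sq[OF a rr] by blast
    then show ?thesis
      using sum_bounded_above[of "{..<n}" "\<lambda>q. card {c\<in>CR. isinc c \<and> key c < (tau a, a) \<and> pc c = q}" "2 ^ (nat r + 1)"]
      by simp
  qed
  finally show ?thesis by simp
qed

lemma S_empty: assumes a: "a < length LM" and rr: "r = mr_value (take a sM)" "r < 0"
  shows "card {c\<in>CR. isinc c \<and> key c < (tau a, a)} = 0"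
proof -
  have e: "{c\<in>CR. isinc c \<and> key c < (tau a, a)} = {}"
    using cstar_bound[OF _ _ _ a rr(1)] rr(2) by fastforce
  show ?thesis unfolding e by simp
qed

lemma read_facts: assumes c: "c \<in> CR" "\<not> isinc c"
  shows "\<exists>r. hasSub c \<and> sa c < length LM \<and> r = mr_value (take (sa c) sM) \<and>
     retC c = CVal (if r \<ge> 0 then k * 2 ^ nat r else 0)"
proof -
  let ?q = "pc c" and ?i = "ip c"
  have cl: "c < length ch" "is_HInv (ch!c)" using c unfolding CR_def by auto
  note C = cinv[OF cl]
  have ei: "es!?i = InvRead ?q" using C c(2) unfolding isinc_def by auto
  have il: "?i < length es" using C by simp
  have "compl c" using c unfolding CR_def by auto
  then obtain d where d: "resp_at ch c d" unfolding compl_def by blast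
  note RF = resp_fc[OF d]
  obtain r where R: "hasN ?q ?i" "es!(nxN ?q ?i) = MRInv ?q" "hasN ?q (nxN ?q ?i)"
     "es!(nxN ?q (nxN ?q ?i)) = MRResp ?q r" "es!(fc ?q ?i) = RespRead ?q (if r \<ge> 0 then k * 2 ^ nat r else 0)"
    using read_chain[OF ei il conjunct1[OF RF]] by blast
  let ?s = "nxN ?q ?i" let ?l = "nxN ?q ?s"
  note N1 = nxN[OF R(1)] and N2 = nxN[OF R(3)]
  have rm: "resp_at mh (midx ?s) (midx ?l)" using m_resp_at[of ?s ?q 0] R N1 by blast
  then have inL: "midx ?s \<in> set LM" and mhl: "mh!(midx ?l) = HRes (hproc (mh!(midx ?s))) (retM (midx ?s))"
    using cmpl by blast+
  have ml: "midx ?l < length mP" "mP!(midx ?l) = ?l" using idx_posl[of ?l es mhist_ev] N2 R by auto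
  have "mh!(midx ?l) = HRes ?q (MVal r)" using mh_at[OF ml(1)] ml(2) R by simp
  then have rv: "retM (midx ?s) = MVal r" using mhl by simp
  have hs: "hasSub c" unfolding hasSub_def using R inL by (simp add: is_minv_def)
  note S = sub_facts[OF hs]
  have ms: "midx ?s < length mP" "mP!(midx ?s) = ?s" using idx_posl[of ?s es mhist_ev] N1 R by auto
  have "mh!(LM!(sa c)) = HInv ?q MR" using S mh_at[OF ms(1)] ms(2) R by simp
  then have "retM (LM!(sa c)) = MVal (mr_value (take (sa c) sM))" using lg_a[of "sa c"] S by simp
  then have rr: "r = mr_value (take (sa c) sM)" using rv S by simp
  have "(SOME d. resp_at ch c d) = d" using d resp_at_unique by (metis someI)
  then have "retC c = resv (ch!d)" using \<open>compl c\<close> unfolding retC_def by simp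
  also have "ch!d = the (chist_ev (es!(cP!d)))" using ch_nth d ch_len unfolding resp_at_def by simp
  finally have "retC c = CVal (if r \<ge> 0 then k * 2 ^ nat r else 0)" using RF R by simp
  then show ?thesis using rr hs S by blast
qed

lemma inc_ret: assumes c: "c \<in> CR" "isinc c" shows "retC c = CAck"
proof (cases "compl c")
  case True
  let ?q = "pc c" and ?i = "ip c"
  have cl: "c < length ch" "is_HInv (ch!c)" using c unfolding CR_def by auto
  note C = cinv[OF cl]
  have ei: "es!?i = InvInc ?q" using inc_ip c by simp
  have il: "?i < length es" using C by simp
  obtain d where d: "resp_at ch c d" using True unfolding compl_def by blast
  note RF = resp_fc[OF d]
  have "es!(fc ?q ?i) = RespInc ?q" using inc_chain[OF ei il conjunct1[OF RF]] by simp
  have "(SOME d. resp_at ch c d) = d" using d resp_at_unique by (metis someI)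
  then have "retC c = resv (ch!d)" using True unfolding retC_def by simp
  also have "ch!d = the (chist_ev (es!(cP!d)))" using ch_nth d ch_len unfolding resp_at_def by simp
  finally show ?thesis using RF \<open>es!(fc ?q ?i) = RespInc ?q\<close> by simp
next
  case False then show ?thesis unfolding retC_def by simp
qed

lemma inv_arg_c: "c \<in> CR \<Longrightarrow> inv_arg (ch!c) = (if isinc c then CInc else CRead)"
proof -
  assume c: "c \<in> CR"
  then have cl: "c < length ch" "is_HInv (ch!c)" unfolding CR_def by auto
  note C = cinv[OF cl]
  have e: "ch!c = the (chist_ev (es!(ip c)))" using ch_nth cl ch_len unfolding ip_def by simp
  show ?thesis unfolding e using C unfolding isinc_def by auto
qed

abbreviation "sC \<equiv> map (\<lambda>i. (inv_arg (ch!i), retC i)) LC"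

lemma num_inc_LC: assumes j: "j < length LC"
  shows "num_inc (take j sC) = card {c\<in>CR. isinc c \<and> key c < key (LC!j)}"
proof -
  have "num_inc (take j sC) = card {b. b < j \<and> isinc (LC!b)}"
    unfolding num_inc_def length_filter_conv_card
  proof (rule arg_cong[where f=card])
    show "{i. i < length (take j sC) \<and> fst (take j sC ! i) = CInc} = {b. b < j \<and> isinc (LC!b)}"
    proof -
      have m: "\<And>b. b < j \<Longrightarrow> LC!b \<in> CR" using j LC_set by (metis nth_mem less_trans)
      show ?thesis using j inv_arg_c[OF m] by (auto split: if_splits)
    qed
  qed
  also have "\<dots> = card ((!) LC ` {b. b < j \<and> isinc (LC!b)})"
    by (rule card_image[symmetric]) (rule inj_on_nth, use LC_dist j in auto)
  also have "(!) LC ` {b. b < j \<and> isinc (LC!b)} = {c\<in>CR. isinc c \<and> key c < key (LC!j)}"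
  proof (intro set_eqI iffI)
    fix c assume "c \<in> (!) LC ` {b. b < j \<and> isinc (LC!b)}"
    then obtain b where b: "b < j" "isinc (LC!b)" "c = LC!b" by blast
    have "LC!b \<in> CR" using b j LC_set by (metis nth_mem less_trans)
    then show "c \<in> {c\<in>CR. isinc c \<and> key c < key (LC!j)}" using LC_strict[OF b(1) j] b by simp
  next
    fix c assume "c \<in> {c\<in>CR. isinc c \<and> key c < key (LC!j)}"
    then have c: "c \<in> set LC" "isinc c" "key c < key (LC!j)" using LC_set by auto
    then obtain b where b: "b < length LC" "LC!b = c" by (auto simp: in_set_conv_nth)
    then have "b < j" using LC_ord[OF j b(1)] c by simp
    then show "c \<in> (!) LC ` {b. b < j \<and> isinc (LC!b)}" using b c by auto
  qed
  finally show ?thesis .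
qed

lemma kpos: "k > 0" and kk: "2 * real n \<le> k * k"
proof -
  have s: "sqrt (2 * real n) > 0" using n1 by simp
  show "k > 0" using s kb by linarith
  have "sqrt (2 * real n) * sqrt (2 * real n) \<le> k * k" using kb s by (intro mult_mono) linarith+
  then show "2 * real n \<le> k * k" by simp
qed

lemma part_legal: "counter_legal k sC"
  unfolding counter_legal_def
proof (intro allI impI)
  fix j assume jl: "j < length sC"
  then have j: "j < length LC" by simp
  let ?c = "LC!j"
  have "?c \<in> set LC" using j by (rule nth_mem)
  then have cR: "?c \<in> CR" by (simp only: LC_set)
  show "case fst (sC ! j) of CInc \<Rightarrow> snd (sC ! j) = CAck
        | CRead \<Rightarrow> \<exists>x. snd (sC ! j) = CVal x \<and> real (num_inc (take j sC)) / k \<le> x \<and> x \<le> k * real (num_inc (take j sC))"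
  proof (cases "isinc ?c")
    case True
    then show ?thesis using j inv_arg_c[OF cR] inc_ret[OF cR] by simp
  next
    case False
    obtain r where R: "hasSub ?c" "sa ?c < length LM" "r = mr_value (take (sa ?c) sM)"
      "retC ?c = CVal (if r \<ge> 0 then k * 2 ^ nat r else 0)" using read_facts[OF cR False] by blast
    let ?a = "sa ?c"
    have kc: "key ?c = (tau ?a, ?a)" using R unfolding key_def by simp
    define NB where "NB = num_inc (take j sC)"
    have NB: "NB = card {c\<in>CR. isinc c \<and> key c < (tau ?a, ?a)}" unfolding NB_def num_inc_LC[OF j] kc ..
    have bnd: "real NB / k \<le> (if r \<ge> 0 then k * 2 ^ nat r else 0) \<and> (if r \<ge> 0 then k * 2 ^ nat r else 0) \<le> k * real NB"
    proof (cases "r \<ge> 0")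
      case True
      have ub: "2 ^ nat r \<le> NB" using UB[OF R(2) R(3) True] NB by simp
      have lb: "NB \<le> n * 2 ^ (nat r + 1)" using LB[OF R(2) R(3)] NB by simp
      have "real NB \<le> real (n * 2 ^ (nat r + 1))" using lb of_nat_le_iff by blast
      also have "\<dots> = real n * 2 ^ (nat r + 1)" by simp
      also have "\<dots> = (2 * real n) * 2 ^ nat r" by simp
      also have "\<dots> \<le> (k * k) * 2 ^ nat r" using kk by (intro mult_right_mono) auto
      finally have "real NB \<le> k * (k * 2 ^ nat r)" by simp
      then have a1: "real NB / k \<le> k * 2 ^ nat r" using kpos by (simp add: divide_le_eq mult.commute)
      have "real (2 ^ nat r) \<le> real NB" using ub of_nat_le_iff by blast
      then have "(2::real) ^ nat r \<le> real NB" by simp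
      then have a2: "k * 2 ^ nat r \<le> k * real NB" using kpos by simp
      show ?thesis using a1 a2 True by simp
    next
      case False
      then have "NB = 0" using S_empty[OF R(2) R(3)] NB by simp
      then show ?thesis using False by simp
    qed
    show ?thesis using j inv_arg_c[OF cR] False R(4) bnd unfolding NB_def by simp
  qed
qed

theorem counter_lin: "linearizable (counter_legal k) (chist es)"
  unfolding linearizable_def
proof (intro conjI exI)
  show "well_formed (chist es)" by (rule wf_chist)
  show "distinct LC" by (rule LC_dist)
  show "\<forall>i\<in>set LC. op_inv ch i" using LC_el unfolding op_inv_def by auto
  show "\<forall>i j. resp_at ch i j \<longrightarrow> i \<in> set LC \<and> ch ! j = HRes (hproc (ch ! i)) (retC i)" using part_resp by blast
  show "\<forall>a b. a < length LC \<longrightarrow> b < length LC \<longrightarrow> (\<exists>j. resp_at ch (LC ! b) j \<and> j < LC ! a) \<longrightarrow> b < a"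
    using part_rt by blast
  show "counter_legal k sC" by (rule part_legal)
qed

end


context exe begin

lemma ms_phase: assumes "t < length es" "es!t = MStep p"
  shows "\<exists>j<t. ((\<exists>v. es!j = MWInv p v) \<or> es!j = MRInv p) \<and> noMS p j t"
proof -
  have st0: "astep k (ps p t) (es!t) = Some (ps p (Suc t))" using assms by (intro pstep) auto
  have ph: "phase (ps p t) = IncInMW \<or> phase (ps p t) = ReadInMR" using A_MStep[OF st0[unfolded assms(2)]] by simp
  have "Ginv p t" using G assms by simp
  then show ?thesis using ph unfolding Ginv_def by blast
qed

lemma cresp_chain: assumes "t1 < length es" "eproc (es!t1) = p" "es!t1 \<noteq> MStep p"
    "hasN p t1" "hasN p (nxN p t1)" "hasN p (nxN p (nxN p t1))"
  shows "\<exists>x. t1 \<le> x \<and> x < length es \<and> eproc (es!x) = p \<and> is_cresp (es!x)"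
proof -
  let ?n1 = "nxN p t1" let ?n2 = "nxN p ?n1" let ?n3 = "nxN p ?n2"
  note N1 = nxN[OF assms(4)] and N2 = nxN[OF assms(5)] and N3 = nxN[OF assms(6)]
  have o: "t1 \<le> ?n1" "t1 \<le> ?n2" "t1 \<le> ?n3" using N1 N2 N3 by linarith+
  have c1: "is_cresp (es!?n1) \<Longrightarrow> ?thesis" using o N1 by blast
  have c2: "is_cresp (es!?n2) \<Longrightarrow> ?thesis" using o N2 by blast
  have c3: "is_cresp (es!?n3) \<Longrightarrow> ?thesis" using o N3 by blast
  have c0: "is_cresp (es!t1) \<Longrightarrow> ?thesis" using assms by blast
  show ?thesis
  proof (cases "es!t1")
    case (InvInc q)
    with assms have e: "es!t1 = InvInc p" by simp
    from C_InvInc[OF e assms(1,4)] show ?thesis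
    proof
      assume "\<exists>v. es!?n1 = MWInv p v"
      then obtain v where v: "es!?n1 = MWInv p v" by blast
      have "es!?n2 = MWResp p" using C_MWInv[OF v N1(2) assms(5)] .
      then have "es!?n3 = RespInc p" using C_MWResp[OF _ N2(2) assms(6)] by simp
      then show ?thesis using c3 unfolding is_cresp_def by simp
    next
      assume "es!?n1 = RespInc p \<and> phase (ps p ?n1) = IncStart"
      then show ?thesis using c1 unfolding is_cresp_def by simp
    qed
  next
    case (InvRead q)
    with assms have e: "es!t1 = InvRead p" by simp
    have "es!?n1 = MRInv p" using C_InvRead[OF e assms(1,4)] .
    then obtain r where "es!?n2 = MRResp p r" using C_MRInv[OF _ N1(2) assms(5)] by blast
    then have "\<exists>x. es!?n3 = RespRead p x" using C_MRResp[OF _ N2(2) assms(6)] by blast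
    then show ?thesis using c3 unfolding is_cresp_def by blast
  next
    case (MWInv q v)
    with assms have e: "es!t1 = MWInv p v" by simp
    have "es!?n1 = MWResp p" using C_MWInv[OF e assms(1,4)] .
    then have "es!?n2 = RespInc p" using C_MWResp[OF _ N1(2) assms(5)] by simp
    then show ?thesis using c2 unfolding is_cresp_def by simp
  next
    case (MRInv q)
    with assms have e: "es!t1 = MRInv p" by simp
    obtain r where "es!?n1 = MRResp p r" using C_MRInv[OF e assms(1,4)] by blast
    then have "\<exists>x. es!?n2 = RespRead p x" using C_MRResp[OF _ N1(2) assms(5)] by blast
    then show ?thesis using c2 unfolding is_cresp_def by blast
  next
    case (MWResp q)
    with assms have e: "es!t1 = MWResp p" by simp
    have "es!?n1 = RespInc p" using C_MWResp[OF e assms(1,4)] .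
    then show ?thesis using c1 unfolding is_cresp_def by simp
  next
    case (MRResp q r)
    with assms have e: "es!t1 = MRResp p r" by simp
    have "\<exists>x. es!?n1 = RespRead p x" using C_MRResp[OF e assms(1,4)] by blast
    then show ?thesis using c1 unfolding is_cresp_def by blast
  next
    case (MStep q) with assms show ?thesis by simp
  next
    case (RespInc q) then show ?thesis using c0 unfolding is_cresp_def by simp
  next
    case (RespRead q x) then show ?thesis using c0 unfolding is_cresp_def by simp
  qed
qed

end

lemma part2:
  assumes ex: "\<forall>t. is_exec n k (map f [0..<t])" and wf: "maxreg_wait_free f"
    and inf: "infinite {t. eproc (f t) = p}"
  shows "infinite {t. eproc (f t) = p \<and> is_cresp (f t)}"
proof -
  have unb: "\<And>t. \<exists>t'\<ge>t. eproc (f t') = p" using inf by (simp add: infinite_nat_iff_unbounded_le)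
  have stepA: "\<And>t. \<exists>t1\<ge>t. eproc (f t1) = p \<and> f t1 \<noteq> MStep p"
  proof -
    fix t
    define t0 where "t0 = (LEAST t'. t' \<ge> t \<and> eproc (f t') = p)"
    have t0: "t0 \<ge> t" "eproc (f t0) = p" unfolding t0_def using unb[of t] by (metis (mono_tags, lifting) LeastI_ex)+
    show "\<exists>t1\<ge>t. eproc (f t1) = p \<and> f t1 \<noteq> MStep p"
    proof (cases "f t0 = MStep p")
      case False then show ?thesis using t0 by blast
    next
      case True
      define es where "es = map f [0..<Suc t0]"
      have esl: "length es = Suc t0" and esn: "\<And>x. x < Suc t0 \<Longrightarrow> es!x = f x" unfolding es_def by (simp_all del: upt_Suc)
      interpret E: exe n k es using ex unfolding es_def by unfold_locales blast
      obtain j where j0: "j < t0" "(\<exists>v. es!j = MWInv p v) \<or> es!j = MRInv p" "E.noMS p j t0"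
        using E.ms_phase[of t0 p] True esl esn by auto
      have j: "j < t0" "(\<exists>v. f j = MWInv p v) \<or> f j = MRInv p" "E.noMS p j t0" using j0 esn by auto
      have mi: "is_minv (f j)" using j(2) unfolding is_minv_def by auto
      have pj: "eproc (f j) = p" using j(2) by auto
      obtain t' where t': "t' > j" "eproc (f t') = p" "is_mresp (f t')"
        using wf mi inf pj unfolding maxreg_wait_free_def by metis
      have "\<not> t' < t0"
      proof
        assume "t' < t0"
        then have "f t' = MStep p" using j(3) t' esn unfolding E.noMS_def by auto
        then show False using t'(3) unfolding is_mresp_def by auto
      qed
      moreover have "t' \<noteq> t0" using True t'(3) unfolding is_mresp_def by auto
      ultimately have "t' > t0" by simp
      moreover have "f t' \<noteq> MStep p" using t'(3) unfolding is_mresp_def by auto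
      ultimately show ?thesis using t0 t' by (intro exI[of _ t']) auto
    qed
  qed
  then obtain g where g: "\<And>t. g t \<ge> t \<and> eproc (f (g t)) = p \<and> f (g t) \<noteq> MStep p" by metis
  have main: "\<And>t. \<exists>x\<ge>t. eproc (f x) = p \<and> is_cresp (f x)"
  proof -
    fix t
    define t1 where "t1 = g t"
    define t2 where "t2 = g (Suc t1)"
    define t3 where "t3 = g (Suc t2)"
    define t4 where "t4 = g (Suc t3)"
    have o: "t \<le> t1" "t1 < t2" "t2 < t3" "t3 < t4" using g unfolding t1_def t2_def t3_def t4_def by (meson Suc_le_lessD)+
    define es where "es = map f [0..<Suc t4]"
    have esl: "length es = Suc t4" and nth: "\<And>x. x < Suc t4 \<Longrightarrow> es!x = f x" unfolding es_def by (simp_all del: upt_Suc)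
    interpret E: exe n k es using ex unfolding es_def by unfold_locales blast
    let ?es = es
    have gg: "\<And>x. eproc (f (g x)) = p \<and> f (g x) \<noteq> MStep p" using g by blast
    have h1: "E.hasN p t1 \<and> E.nxN p t1 \<le> t2" using E.nxN_le[of t1 t2 p] o gg[of "Suc t1"] esl nth unfolding t2_def by simp
    have h2: "E.hasN p (E.nxN p t1) \<and> E.nxN p (E.nxN p t1) \<le> t3"
      using E.nxN_le[of "E.nxN p t1" t3 p] o gg[of "Suc t2"] h1 esl nth unfolding t3_def by simp
    have h3: "E.hasN p (E.nxN p (E.nxN p t1))"
      using E.nxN_le[of "E.nxN p (E.nxN p t1)" t4 p] o gg[of "Suc t3"] h2 esl nth unfolding t4_def by simp
    have t1p: "t1 < length es" "eproc (es!t1) = p" "es!t1 \<noteq> MStep p" using o gg[of t] esl nth unfolding t1_def by auto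
    obtain x where x: "t1 \<le> x" "x < length ?es" "eproc (?es!x) = p" "is_cresp (?es!x)"
      using E.cresp_chain[OF t1p h1[THEN conjunct1] h2[THEN conjunct1] h3] by blast
    then show "\<exists>x\<ge>t. eproc (f x) = p \<and> is_cresp (f x)" using o nth esl by (intro exI[of _ x]) auto
  qed
  then show ?thesis by (simp add: infinite_nat_iff_unbounded_le)
qed


context exe begin

lemma seg_bound: assumes i: "i < length es" "is_cinv (es!i)"
    and hb: "\<forall>j<length es. is_minv (es!j) \<longrightarrow> real (seg_steps is_mresp es j) \<le> B"
  shows "real (seg_steps is_cresp es i) \<le> 2 + max 0 B"
proof -
  define p where "p = eproc (es!i)"
  define SC where "SC = {l. i \<le> l \<and> l < length es \<and> eproc (es!l) = p \<and>
      (\<forall>l'. i < l' \<and> l' < l \<longrightarrow> \<not> (eproc (es!l') = p \<and> is_cresp (es!l')))}"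
  have segC: "seg_steps is_cresp es i = card SC" unfolding seg_steps_def SC_def p_def by simp
  have finC: "finite SC" unfolding SC_def by (rule finite_subset[of _ "{..<length es}"]) auto
  have ei: "es!i = InvInc p \<or> es!i = InvRead p" using i(2) unfolding is_cinv_def p_def by auto
  have ph: "phase (ps p (Suc i)) \<noteq> IncInMW \<and> phase (ps p (Suc i)) \<noteq> ReadInMR"
    using ph_after[OF i(1) p_def[symmetric]] ei by blast
  have iSC: "\<And>l. l \<in> SC \<Longrightarrow> l \<noteq> i \<Longrightarrow> i < l \<and> l < length es \<and> eproc (es!l) = p"
    unfolding SC_def by auto
  show ?thesis
  proof (cases "\<exists>l. i < l \<and> l < length es \<and> eproc (es!l) = p")
    case False
    then have "SC \<subseteq> {i}" using iSC by blast
    then have "card SC \<le> 1" using card_mono[of "{i}" SC] by simp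
    then show ?thesis using segC by simp
  next
    case True
    then obtain l1 where l1: "i < l1" "l1 < length es" "eproc (es!l1) = p" by blast
    have hN: "hasN p i" using first_after[OF i(1) p_def[symmetric] _ _ l1] ph by blast
    let ?s = "nxN p i"
    note N = nxN[OF hN]
    have ge_s: "\<And>l. l \<in> SC \<Longrightarrow> l \<noteq> i \<Longrightarrow> ?s \<le> l"
      using iSC first_after[OF i(1) p_def[symmetric]] ph by blast
    show ?thesis
    proof (cases "is_cresp (es!?s)")
      case True
      have "SC \<subseteq> {i, ?s}"
      proof
        fix l assume l: "l \<in> SC"
        show "l \<in> {i, ?s}"
        proof (cases "l = i")
          case False
          then have "?s \<le> l" using ge_s l by blast
          moreover have "\<not> ?s < l" using l True N unfolding SC_def by blast
          ultimately show ?thesis by simp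
        qed simp
      qed
      moreover have "card {i, ?s} \<le> 2" by (cases "i = ?s") auto
      ultimately have "card SC \<le> 2" using card_mono[of "{i, ?s}" SC] by simp
      then show ?thesis using segC by simp
    next
      case False
      have ms: "es!?s = MRInv p \<or> (\<exists>v. es!?s = MWInv p v)"
        using ei C_InvInc[OF _ i(1) hN] C_InvRead[OF _ i(1) hN] False unfolding is_cresp_def by auto
      then have mi: "is_minv (es!?s)" unfolding is_minv_def by auto
      define SM where "SM = {l. ?s \<le> l \<and> l < length es \<and> eproc (es!l) = p \<and>
         (\<forall>l'. ?s < l' \<and> l' < l \<longrightarrow> \<not> (eproc (es!l') = p \<and> is_mresp (es!l')))}"
      have segM: "seg_steps is_mresp es ?s = card SM" unfolding seg_steps_def SM_def using N by simp
      have finM: "finite SM" unfolding SM_def by (rule finite_subset[of _ "{..<length es}"]) auto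
      have bM: "real (card SM) \<le> B" using hb N mi segM by metis
      have sub: "SC \<subseteq> insert i (insert (nxN p (nxN p ?s)) SM)"
      proof
        fix l assume l: "l \<in> SC"
        show "l \<in> insert i (insert (nxN p (nxN p ?s)) SM)"
        proof (cases "l = i")
          case False
          have l2: "?s \<le> l" "i < l" "l < length es" "eproc (es!l) = p" using ge_s l False iSC by auto
          show ?thesis
          proof (cases "hasN p ?s")
            case hs: True
            let ?l0 = "nxN p ?s"
            note N2 = nxN[OF hs]
            have mr: "es!?l0 = MWResp p \<or> (\<exists>r. es!?l0 = MRResp p r)"
              using ms C_MWInv[OF _ N(2) hs] C_MRInv[OF _ N(2) hs] by auto
            show ?thesis
            proof (cases "l \<le> ?l0")
              case True
              have "\<forall>l'. ?s < l' \<and> l' < l \<longrightarrow> \<not> (eproc (es!l') = p \<and> is_mresp (es!l'))"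
                using N2(5) True unfolding is_mresp_def by fastforce
              then have "l \<in> SM" unfolding SM_def using l2 by simp
              then show ?thesis by simp
            next
              case False
              have ph2: "phase (ps p (Suc ?l0)) \<noteq> IncInMW \<and> phase (ps p (Suc ?l0)) \<noteq> ReadInMR"
                using ph_after[OF N2(2) N2(3)] mr by blast
              have hu: "hasN p ?l0" "nxN p ?l0 \<le> l" using first_after[OF N2(2) N2(3) _ _ _ l2(3,4)] ph2 False by auto
              note N3 = nxN[OF hu(1)]
              have cr: "is_cresp (es!nxN p ?l0)"
                using mr C_MWResp[OF _ N2(2) hu(1)] C_MRResp[OF _ N2(2) hu(1)] unfolding is_cresp_def by auto
              have "\<not> nxN p ?l0 < l"
              proof
                assume "nxN p ?l0 < l"
                moreover have "i < nxN p ?l0" using N N2 N3 by linarith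
                ultimately show False using l cr N3 unfolding SC_def by blast
              qed
              then show ?thesis using hu by simp
            qed
          next
            case hs: False
            have "\<forall>l'. ?s < l' \<and> l' < l \<longrightarrow> \<not> (eproc (es!l') = p \<and> is_mresp (es!l'))"
            proof (intro allI impI notI)
              fix l' assume a: "?s < l' \<and> l' < l" "eproc (es!l') = p \<and> is_mresp (es!l')"
              then have "es!l' \<noteq> MStep p" unfolding is_mresp_def by auto
              then have "hasN p ?s" using nxN_le[of ?s l' p] a l2 by auto
              then show False using hs by simp
            qed
            then have "l \<in> SM" unfolding SM_def using l2 by simp
            then show ?thesis by simp
          qed
        qed simp
      qed
      have "card SC \<le> card (insert i (insert (nxN p (nxN p ?s)) SM))"
        by (rule card_mono) (use finM sub in auto)
      also have "\<dots> \<le> card SM + 2" using card_insert_le[of SM] finM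
        by (metis add_2_eq_Suc' card_insert_if finite_insert le_SucI le_refl Suc_le_mono)
      finally have "real (card SC) \<le> real (card SM) + 2" by linarith
      then show ?thesis using segC bM by simp
    qed
  qed
qed

end


lemma lfm: "(\<And>x. P x \<Longrightarrow> Q x) \<Longrightarrow> length (filter P xs) \<le> length (filter Q xs)"
  by (induct xs) auto


context exe begin

lemma cnt_le_incs: "t \<le> length es \<Longrightarrow> cnt es p t \<le> num_incs es"
proof -
  assume t: "t \<le> length es"
  have "cnt es p t \<le> length (filter (\<lambda>e. \<exists>p. e = InvInc p) (take t es))"
    unfolding cnt_def by (rule lfm) auto
  also have "\<dots> \<le> num_incs es" unfolding num_incs_def
    by (metis append_take_drop_id filter_append le_add1 length_append)
  finally show ?thesis .
qed

lemma part1a: assumes "MWInv p v \<in> set es" "num_incs es \<le> m" "m \<ge> 1"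
  shows "v \<le> \<lceil>log 2 (real m)\<rceil>"
proof -
  obtain t where t: "t < length es" "es!t = MWInv p v" using assms(1) by (auto simp: in_set_conv_nth)
  have F: "v \<ge> 0" "cnt es p t = 2 ^ nat v" using F1[OF t(2,1)] by auto
  have "2 ^ nat v \<le> m" using cnt_le_incs[of t p] t F assms(2) by simp
  then have "(2::real) ^ nat v \<le> real m" by (metis of_nat_le_iff of_nat_numeral of_nat_power)
  then have "real (nat v) \<le> log 2 (real m)" by (intro le_log_of_power) auto
  then have "real_of_int v \<le> log 2 (real m)" using F(1) by simp
  then show ?thesis by (metis ceiling_mono ceiling_of_int)
qed

end

lemma arith3: assumes "(m::nat) \<ge> 1"
  shows "max 1 (log 2 (real_of_int \<lceil>log 2 (real m)\<rceil>)) \<le> 2 * max 1 (log 2 (log 2 (real m)))"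
proof (cases "m = 1")
  case True then show ?thesis by (simp add: log_def)
next
  case False
  then have m2: "(2::real) ^ 1 \<le> real m" using assms by simp
  define x where "x = log 2 (real m)"
  have x1: "x \<ge> 1" unfolding x_def using le_log_of_power[OF m2] by simp
  have c1: "real_of_int \<lceil>x\<rceil> \<ge> 1" using x1 by (meson le_of_int_ceiling order_trans)
  have c2: "real_of_int \<lceil>x\<rceil> \<le> 2 * x" using x1 ceiling_correct[of x] by linarith
  have "log 2 (real_of_int \<lceil>x\<rceil>) \<le> log 2 (2 * x)" using c1 c2 by (intro log_mono) auto
  also have "\<dots> = 1 + log 2 x" using x1 by (simp add: log_mult)
  finally have "log 2 (real_of_int \<lceil>x\<rceil>) \<le> 1 + log 2 x" .
  then show ?thesis unfolding x_def[symmetric] by linarith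
qed


theorem mainTheorem3:
  shows
   "(\<forall>(n::nat) (m::nat) (k::real) es.
       n \<ge> 1 \<and> m \<ge> 1 \<and> k \<ge> sqrt (2 * real n) \<and>
       is_exec n k es \<and> num_incs es \<le> m \<and> linearizable maxreg_legal (mhist es) \<longrightarrow>
         (\<forall>p v. MWInv p v \<in> set es \<longrightarrow> v \<le> \<lceil>log 2 (real m)\<rceil>) \<and>
         linearizable (counter_legal k) (chist es))
  \<and> (\<forall>(n::nat) (m::nat) (k::real) (f :: nat \<Rightarrow> ev).
       n \<ge> 1 \<and> m \<ge> 1 \<and> k \<ge> sqrt (2 * real n) \<and>
       (\<forall>t. is_exec n k (map f [0..<t]) \<and> num_incs (map f [0..<t]) \<le> m) \<and>
       maxreg_wait_free f \<longrightarrow>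
         (\<forall>p. infinite {t. eproc (f t) = p} \<longrightarrow> infinite {t. eproc (f t) = p \<and> is_cresp (f t)}))
  \<and> (\<forall>c::real. \<exists>C::real. \<forall>(n::nat) (m::nat) (k::real) es.
       n \<ge> 1 \<and> m \<ge> 1 \<and> k \<ge> sqrt (2 * real n) \<and>
       is_exec n k es \<and> num_incs es \<le> m \<and> linearizable maxreg_legal (mhist es) \<and>
       (\<forall>i < length es. is_minv (es ! i) \<longrightarrow>
          real (seg_steps is_mresp es i) \<le> c * max 1 (log 2 (real_of_int \<lceil>log 2 (real m)\<rceil>))) \<longrightarrow>
         (\<forall>i < length es. is_cinv (es ! i) \<longrightarrow>
            real (seg_steps is_cresp es i) \<le> C * max 1 (log 2 (log 2 (real m)))))"
proof (intro conjI)
  show "\<forall>(n::nat) (m::nat) (k::real) es.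
       n \<ge> 1 \<and> m \<ge> 1 \<and> k \<ge> sqrt (2 * real n) \<and>
       is_exec n k es \<and> num_incs es \<le> m \<and> linearizable maxreg_legal (mhist es) \<longrightarrow>
         (\<forall>p v. MWInv p v \<in> set es \<longrightarrow> v \<le> \<lceil>log 2 (real m)\<rceil>) \<and>
         linearizable (counter_legal k) (chist es)"
  proof (intro allI impI)
    fix n m :: nat and k :: real and es
    assume h: "n \<ge> 1 \<and> m \<ge> 1 \<and> k \<ge> sqrt (2 * real n) \<and>
       is_exec n k es \<and> num_incs es \<le> m \<and> linearizable maxreg_legal (mhist es)"
    interpret E: exe n k es using h by unfold_locales simp
    obtain L ret where L: "distinct L" "\<forall>i\<in>set L. op_inv (mhist es) i"
      "\<forall>i j. resp_at (mhist es) i j \<longrightarrow> i \<in> set L \<and> mhist es ! j = HRes (hproc (mhist es ! i)) (ret i)"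
      "\<forall>a b. a < length L \<longrightarrow> b < length L \<longrightarrow> (\<exists>j. resp_at (mhist es) (L!b) j \<and> j < L!a) \<longrightarrow> b < a"
      "maxreg_legal (map (\<lambda>i. (inv_arg (mhist es ! i), ret i)) L)"
      using h unfolding linearizable_def by blast
    interpret Lz: lin n k es L ret using h L by unfold_locales auto
    show "(\<forall>p v. MWInv p v \<in> set es \<longrightarrow> v \<le> \<lceil>log 2 (real m)\<rceil>) \<and> linearizable (counter_legal k) (chist es)"
      using E.part1a h Lz.counter_lin by blast
  qed
next
  show "\<forall>(n::nat) (m::nat) (k::real) (f :: nat \<Rightarrow> ev).
       n \<ge> 1 \<and> m \<ge> 1 \<and> k \<ge> sqrt (2 * real n) \<and>
       (\<forall>t. is_exec n k (map f [0..<t]) \<and> num_incs (map f [0..<t]) \<le> m) \<and>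
       maxreg_wait_free f \<longrightarrow>
         (\<forall>p. infinite {t. eproc (f t) = p} \<longrightarrow> infinite {t. eproc (f t) = p \<and> is_cresp (f t)})"
    using part2 by blast
next
  show "\<forall>c::real. \<exists>C::real. \<forall>(n::nat) (m::nat) (k::real) es.
       n \<ge> 1 \<and> m \<ge> 1 \<and> k \<ge> sqrt (2 * real n) \<and>
       is_exec n k es \<and> num_incs es \<le> m \<and> linearizable maxreg_legal (mhist es) \<and>
       (\<forall>i < length es. is_minv (es ! i) \<longrightarrow>
          real (seg_steps is_mresp es i) \<le> c * max 1 (log 2 (real_of_int \<lceil>log 2 (real m)\<rceil>))) \<longrightarrow>
         (\<forall>i < length es. is_cinv (es ! i) \<longrightarrow>
            real (seg_steps is_cresp es i) \<le> C * max 1 (log 2 (log 2 (real m))))"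
  proof (intro allI exI[of _ "2 + 2 * \<bar>c\<bar>" for c])
    fix c :: real and n m :: nat and k :: real and es
    show "n \<ge> 1 \<and> m \<ge> 1 \<and> k \<ge> sqrt (2 * real n) \<and>
       is_exec n k es \<and> num_incs es \<le> m \<and> linearizable maxreg_legal (mhist es) \<and>
       (\<forall>i < length es. is_minv (es ! i) \<longrightarrow>
          real (seg_steps is_mresp es i) \<le> c * max 1 (log 2 (real_of_int \<lceil>log 2 (real m)\<rceil>))) \<longrightarrow>
         (\<forall>i < length es. is_cinv (es ! i) \<longrightarrow>
            real (seg_steps is_cresp es i) \<le> (2 + 2 * \<bar>c\<bar>) * max 1 (log 2 (log 2 (real m))))"
    proof (intro impI allI)
      fix i
      assume h: "n \<ge> 1 \<and> m \<ge> 1 \<and> k \<ge> sqrt (2 * real n) \<and>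
       is_exec n k es \<and> num_incs es \<le> m \<and> linearizable maxreg_legal (mhist es) \<and>
       (\<forall>i < length es. is_minv (es ! i) \<longrightarrow>
          real (seg_steps is_mresp es i) \<le> c * max 1 (log 2 (real_of_int \<lceil>log 2 (real m)\<rceil>)))"
        and i: "i < length es" "is_cinv (es ! i)"
      interpret E: exe n k es using h by unfold_locales simp
      let ?A = "max 1 (log 2 (real_of_int \<lceil>log 2 (real m)\<rceil>))" and ?B = "max 1 (log 2 (log 2 (real m)))"
      have s: "real (seg_steps is_cresp es i) \<le> 2 + max 0 (c * ?A)"
        using E.seg_bound[of i "c * ?A"] h i by blast
      have AB: "?A \<le> 2 * ?B" using arith3 h by blast
      have B1: "?B \<ge> 1" by simp
      have A1: "?A \<ge> 1" by simp
      have ca: "c * ?A \<le> \<bar>c\<bar> * ?A" using A1 by (intro mult_right_mono) auto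
      have c0: "0 \<le> \<bar>c\<bar> * ?A" using A1 by simp
      have "max 0 (c * ?A) \<le> \<bar>c\<bar> * ?A" using ca c0 by simp
      also have "\<dots> \<le> \<bar>c\<bar> * (2 * ?B)" using AB by (intro mult_left_mono) auto
      finally have "2 + max 0 (c * ?A) \<le> 2 * ?B + 2 * \<bar>c\<bar> * ?B" using B1 by linarith
      also have "\<dots> = (2 + 2 * \<bar>c\<bar>) * ?B" by (simp add: algebra_simps)
      finally show "real (seg_steps is_cresp es i) \<le> (2 + 2 * \<bar>c\<bar>) * ?B" using s by linarith
    qed
  qed
qed


end
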